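(* Define $g_2(n)$ by $$\sum_{n=0}^{\infty}g_2(n)q^n=\frac{(-q;q)_\infty}{(q;q)_\infty}\,\phi(q^2)=\frac{\ell_4^5}{\ell_1^2\ell_2\ell_8^2}.$$ Then for all integers $\alpha\ge0$: (i) for every prime $p\ge3$ and every $1\le j\le p-1$, $$\sum_{n=0}^{\infty} g_2\!\left(16p^{2\alpha}n+2p^{2\alpha}\right)q^n\equiv 2\psi(q)\pmod 4,\qquad g_2\!\left(16p^{2\alpha+2}n+16p^{2\alpha+1}j+2p^{2\alpha+2}\right)\equiv0\pmod 4\ \text{ for all } n\ge0;$$ (ii) for every prime $p\ge5$ with $\left(\frac{-8}{p}\right)=-1$ and every $1\le j\le p-1$, $$\sum_{n=0}^{\infty} g_2\!\left(8p^{2\alpha}n+3p^{2\alpha}\right)q^n\equiv 4\ell_1\ell_8\pmod 8,\qquad g_2\!\left(8p^{2\alpha+2}n+8p^{2\alpha+1}j+3p^{2\alpha+2}\right)\equiv0\pmod 8\ \text{ for all } n\ge0.$$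
   Context: $(A;q)_\infty=\prod_{j\ge0}(1-Aq^j)$ and $\ell_n=(q^n;q^n)_\infty$ for integers $n\ge1$. $\phi(q)=\sum_{m\in\mathbb Z}q^{m^2}$ and $\psi(q)=\sum_{m\ge0}q^{m(m+1)/2}=\ell_2^2/\ell_1$. A congruence $A(q)\equiv B(q)\pmod M$ between power series with integer coefficients means that corresponding coefficients are congruent modulo $M$. $\left(\frac{\cdot}{p}\right)$ is the Legendre symbol. *)

theory Defs
  imports "HOL-Computational_Algebra.Formal_Power_Series" "HOL-Number_Theory.Number_Theory"
begin

text \<open>ell k = (q^k;q^k)_infinity as a formal power series over int.  The n-th
coefficient of the infinite product equals the n-th coefficient of the finite
product over j = 1..n (for k >= 1 the remaining factors are 1 + O(q^(n+1))).\<close>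
definition ell :: "nat \<Rightarrow> int fps" where
  "ell k = Abs_fps (\<lambda>n. fps_nth (\<Prod>j\<in>{1..n}. 1 - fps_X ^ (k * j)) n)"

text \<open>The series sum_n g2(n) q^n = ell_4^5 / (ell_1^2 ell_2 ell_8^2); the denominator has
constant term 1, so its inverse is computed by fps_right_inverse with constant 1.\<close>
definition G2 :: "int fps" where
  "G2 = ell 4 ^ 5 * fps_right_inverse (ell 1 ^ 2 * ell 2 * ell 8 ^ 2) 1"

definition g2 :: "nat \<Rightarrow> int" where
  "g2 n = fps_nth G2 n"

definition psi :: "int fps" where
  "psi = Abs_fps (\<lambda>n. if \<exists>m::nat. n = m * (m + 1) div 2 then 1 else 0)"

end

theory Submission
  imports Defs
begin

unbundle fps_syntax

fun qb :: "'a::comm_ring_1 \<Rightarrow> nat \<Rightarrow> nat \<Rightarrow> 'a" where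
  "qb Q 0 k = (if k = 0 then 1 else 0)"
| "qb Q (Suc m) 0 = 1"
| "qb Q (Suc m) (Suc k) = qb Q m k + Q^(Suc k) * qb Q m (Suc k)"

lemma qb_gt: "m < k \<Longrightarrow> qb Q m k = 0"
proof (induction m arbitrary: k)
  case 0 then show ?case by simp
next
  case (Suc m) then show ?case by (cases k) auto
qed

lemma qb_0 [simp]: "qb Q m 0 = 1" by (cases m) auto

lemma tri_Suc: "Suc k * (Suc k - 1) div 2 = k * (k - 1) div 2 + k"
proof -
  have "Suc k * (Suc k - 1) = k * (k - 1) + 2 * k" by (cases k) (auto simp: algebra_simps)
  then show ?thesis by simp
qed

lemma rothe:
  fixes a y Q :: "'a::comm_ring_1"
  shows "(\<Prod>i<m. a + y * Q^i) = (\<Sum>k\<le>m. qb Q m k * Q^(k*(k-1) div 2) * y^k * a^(m-k))"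
proof (induction m arbitrary: y)
  case 0 then show ?case by simp
next
  case (Suc m)
  define h where "h k = qb Q m k * Q^(k*(k-1) div 2 + k) * y^k * a^(Suc m - k)" for k
  have "(\<Prod>i<Suc m. a + y * Q^i) = (a + y) * (\<Prod>i<m. a + (y*Q) * Q^i)"
    by (subst prod.lessThan_Suc_shift) (simp add: ac_simps)
  also have "\<dots> = (a + y) * (\<Sum>k\<le>m. qb Q m k * Q^(k*(k-1) div 2) * (y*Q)^k * a^(m-k))"
    using Suc.IH by simp
  also have "\<dots> = (\<Sum>k\<le>m. a * (qb Q m k * Q^(k*(k-1) div 2) * (y*Q)^k * a^(m-k))) + (\<Sum>k\<le>m. y * (qb Q m k * Q^(k*(k-1) div 2) * (y*Q)^k * a^(m-k)))"
    by (simp add: distrib_right sum_distrib_left sum.distrib)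
  also have "\<dots> = (\<Sum>k\<le>m. h k) + (\<Sum>k\<le>m. qb Q m k * Q^(k*(k-1) div 2 + k) * y^(Suc k) * a^(m-k))"
    unfolding h_def
    by (intro arg_cong2[where f="(+)"] sum.cong refl)
       (auto simp: power_mult_distrib power_add Suc_diff_le algebra_simps)
  also have "(\<Sum>k\<le>m. h k) = a^(Suc m) + (\<Sum>k\<le>m. h (Suc k))"
  proof -
    have "(\<Sum>k\<le>Suc m. h k) = h 0 + (\<Sum>k\<le>m. h (Suc k))" by (rule sum.atMost_Suc_shift)
    moreover have "(\<Sum>k\<le>Suc m. h k) = (\<Sum>k\<le>m. h k)" by (simp add: h_def qb_gt)
    ultimately show ?thesis by (simp add: h_def)
  qed
  also have "a^(Suc m) + (\<Sum>k\<le>m. h (Suc k)) + (\<Sum>k\<le>m. qb Q m k * Q^(k*(k-1) div 2 + k) * y^(Suc k) * a^(m-k))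
     = qb Q (Suc m) 0 * Q^(0*(0-1) div 2) * y^0 * a^(Suc m - 0) +
       (\<Sum>k\<le>m. qb Q (Suc m) (Suc k) * Q^(Suc k*(Suc k-1) div 2) * y^(Suc k) * a^(Suc m - Suc k))"
    unfolding h_def tri_Suc qb.simps distrib_right sum.distrib
    by (simp add: algebra_simps power_add)
  also have "\<dots> = (\<Sum>k\<le>Suc m. qb Q (Suc m) k * Q^(k*(k-1) div 2) * y^k * a^(Suc m - k))"
    by (rule sum.atMost_Suc_shift[symmetric])
  finally show ?case by simp
qed

definition pf :: "'a::comm_ring_1 \<Rightarrow> nat \<Rightarrow> 'a" where
  "pf Q r = (\<Prod>i\<in>{1..r}. 1 - Q^i)"

lemma pf_0 [simp]: "pf Q 0 = 1" by (simp add: pf_def)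
lemma pf_Suc: "pf Q (Suc r) = pf Q r * (1 - Q^(Suc r))"
  by (simp add: pf_def prod.cl_ivl_Suc)

lemma qb_pf: "k \<le> m \<Longrightarrow> qb Q m k * pf Q k * pf Q (m-k) = pf Q m"
proof (induction m arbitrary: k)
  case 0 then show ?case by simp
next
  case (Suc m)
  show ?case
  proof (cases k)
    case 0 then show ?thesis by simp
  next
    case (Suc k')
    have A0: "qb Q m k' * pf Q (Suc k') * pf Q (m - k') = (qb Q m k' * pf Q k' * pf Q (m - k')) * (1 - Q^(Suc k'))"
      by (simp add: pf_Suc ac_simps)
    have A: "qb Q m k' * pf Q (Suc k') * pf Q (m - k') = pf Q m * (1 - Q^(Suc k'))"
      using Suc.IH[of k'] Suc.prems Suc unfolding A0 by simp
    show ?thesis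
    proof (cases "k' = m")
      case True
      then show ?thesis using A Suc by (simp add: qb_gt pf_Suc algebra_simps)
    next
      case False
      then have km: "Suc k' \<le> m" using Suc.prems Suc by simp
      have e: "m - k' = Suc (m - Suc k')" using km by simp
      have B0: "Q^(Suc k') * qb Q m (Suc k') * pf Q (Suc k') * pf Q (m - k') = Q^(Suc k') * (qb Q m (Suc k') * pf Q (Suc k') * pf Q (m - Suc k')) * (1 - Q^(m - k'))"
        unfolding e pf_Suc[of Q "m - Suc k'"] by (simp add: ac_simps)
      have B: "Q^(Suc k') * qb Q m (Suc k') * pf Q (Suc k') * pf Q (m - k') = Q^(Suc k') * pf Q m * (1 - Q^(m - k'))"
        unfolding B0 Suc.IH[OF km] ..
      have "k' + (m - k') = m" using km by simp
      then have P: "Q^k' * Q^(m-k') = Q^m" by (metis power_add)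
      have C: "pf Q m * (1 - Q^(Suc k')) + Q^(Suc k') * pf Q m * (1 - Q^(m - k')) = pf Q (Suc m)"
      proof -
        have g: "\<And>x a b::'a. x * (1 - a) + a * x * (1 - b) = x * (1 - a * b)" by (simp add: algebra_simps)
        have "Q^(Suc k') * Q^(m-k') = Q^(Suc m)" using P by (simp add: mult.assoc)
        then show ?thesis unfolding g pf_Suc by simp
      qed
      have "qb Q (Suc m) k * pf Q k * pf Q (Suc m - k) =
          qb Q m k' * pf Q (Suc k') * pf Q (m - k') + Q^(Suc k') * qb Q m (Suc k') * pf Q (Suc k') * pf Q (m - k')"
        using Suc by (simp add: algebra_simps)
      then show ?thesis unfolding A B C .
    qed
  qed
qed

definition eqm :: "nat \<Rightarrow> 'a::comm_ring_1 fps \<Rightarrow> 'a fps \<Rightarrow> bool" where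
  "eqm L f g \<longleftrightarrow> (\<forall>i<L. f $ i = g $ i)"

lemma eqm_refl [simp]: "eqm L f f" by (simp add: eqm_def)
lemma eqm_sym: "eqm L f g \<Longrightarrow> eqm L g f" by (simp add: eqm_def)
lemma eqm_trans: "eqm L f g \<Longrightarrow> eqm L g h \<Longrightarrow> eqm L f h" by (simp add: eqm_def)
lemma eqm_mono: "eqm L f g \<Longrightarrow> L' \<le> L \<Longrightarrow> eqm L' f g" by (simp add: eqm_def)

lemma eqm_mult: "eqm L f f' \<Longrightarrow> eqm L g g' \<Longrightarrow> eqm L (f*g) (f'*g')"
  unfolding eqm_def fps_mult_nth by (auto intro!: sum.cong)

lemma eqm_add: "eqm L f f' \<Longrightarrow> eqm L g g' \<Longrightarrow> eqm L (f+g) (f'+g')"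
  unfolding eqm_def by auto

lemma eqm_power: "eqm L f g \<Longrightarrow> eqm L (f^n) (g^n)"
  by (induction n) (auto intro: eqm_mult)

lemma eqm_prod: "(\<And>x. x \<in> A \<Longrightarrow> eqm L (f x) (g x)) \<Longrightarrow> eqm L (\<Prod>x\<in>A. f x) (\<Prod>x\<in>A. g x)"
proof (induction A rule: infinite_finite_induct)
  case (insert x F) then show ?case by (auto intro: eqm_mult)
qed auto

lemma eqm_one_minus_X: "L \<le> r \<Longrightarrow> eqm L (1 - fps_X^r) 1"
  unfolding eqm_def by auto

lemma eqm_one_plus_X: "L \<le> r \<Longrightarrow> eqm L (1 + fps_X^r) 1"
  unfolding eqm_def by auto

lemma eqm_Xpow_mult: "L \<le> p \<Longrightarrow> eqm L (fps_X^p * f) 0"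
  unfolding eqm_def by (auto simp: fps_X_power_mult_nth)

lemma eqm_cancel:
  fixes P :: "'a::comm_ring_1 fps"
  assumes "eqm L (f*P) (g*P)" "P $ 0 = 1"
  shows "eqm L f g"
proof -
  define P' where "P' = fps_right_inverse P 1"
  have PP: "P * P' = 1" unfolding P'_def by (rule fps_right_inverse) (simp add: assms)
  have "eqm L (f*P*P') (g*P*P')" using assms(1) by (rule eqm_mult) simp
  then show ?thesis by (simp add: mult.assoc PP)
qed

lemma eqm_all: "(\<And>N. eqm (Suc N) f g) \<Longrightarrow> f = g"
  by (rule fps_ext) (auto simp: eqm_def)

lemma pf_nth0: "e \<ge> 1 \<Longrightarrow> pf (fps_X^e :: 'a::comm_ring_1 fps) r $ 0 = 1"
  by (induction r) (auto simp: pf_Suc simp flip: power_mult)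

lemma pf_trunc:
  assumes e: "e \<ge> 1" and r: "N \<le> r"
  shows "eqm (Suc N) (pf (fps_X^e :: 'a::comm_ring_1 fps) r) (pf (fps_X^e) N)"
proof -
  have "eqm (Suc N) (pf (fps_X^e :: 'a fps) (N + d)) (pf (fps_X^e) N)" for d
  proof (induction d)
    case (Suc d)
    have "eqm (Suc N) (1 - (fps_X^e :: 'a fps)^(Suc (N+d))) 1"
    proof -
      have "1 * Suc (N+d) \<le> e * Suc (N+d)" using e by (intro mult_le_mono1)
      then have "Suc N \<le> e * Suc (N+d)" by (metis Suc_le_mono le_add1 mult_1 order_trans)
      then show ?thesis unfolding power_mult[symmetric] by (intro eqm_one_minus_X)
    qed
    then have "eqm (Suc N) (pf (fps_X^e :: 'a fps) (N + d) * (1 - (fps_X^e)^(Suc (N+d)))) (pf (fps_X^e) N * 1)"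
      using Suc.IH by (intro eqm_mult)
    then show ?case by (simp add: pf_Suc)
  qed simp
  from this[of "r - N"] r show ?thesis by simp
qed

lemma qb_trunc:
  assumes e: "e \<ge> 1" and "k \<le> m" "N \<le> k" "N \<le> m - k" "N \<le> M"
  shows "eqm (Suc N) (qb (fps_X^e :: 'a::comm_ring_1 fps) m k * pf (fps_X^e) M) 1"
proof -
  let ?Q = "fps_X^e :: 'a fps"
  let ?P = "pf ?Q N"
  have P0: "?P $ 0 = 1" using e by (rule pf_nth0)
  have "eqm (Suc N) (qb ?Q m k * pf ?Q k * pf ?Q (m-k)) (qb ?Q m k * ?P * ?P)"
    using assms by (intro eqm_mult pf_trunc) auto
  moreover have "qb ?Q m k * pf ?Q k * pf ?Q (m-k) = pf ?Q m" using assms by (intro qb_pf)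
  moreover have "eqm (Suc N) (pf ?Q m) ?P" using assms by (intro pf_trunc) auto
  ultimately have "eqm (Suc N) ((qb ?Q m k * ?P) * ?P) (1 * ?P)"
    by (metis eqm_sym eqm_trans mult_1)
  then have "eqm (Suc N) (qb ?Q m k * ?P) 1" using P0 by (rule eqm_cancel)
  moreover have "eqm (Suc N) (qb ?Q m k * pf ?Q M) (qb ?Q m k * ?P)"
    using assms by (intro eqm_mult pf_trunc) auto
  ultimately show ?thesis by (rule eqm_trans[rotated])
qed

definition Dsq :: "nat \<Rightarrow> nat \<Rightarrow> nat" where "Dsq n k = (if n \<le> k then (k-n)^2 else (n-k)^2)"
definition Dt :: "nat \<Rightarrow> nat \<Rightarrow> nat" where "Dt n k = (if n \<le> k then (k-n)*(k-n+1) div 2 else (n-k)*(n-k-1) div 2)"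

lemma int_mul_pred: "int (k*(k-1)) = int k * (int k - 1)" by (cases k) (auto simp: algebra_simps)

lemma int_Dsq: "int (Dsq n k) = (int k - int n)^2"
proof (cases "n \<le> k")
  case True then show ?thesis unfolding Dsq_def by (simp add: of_nat_diff)
next
  case False then show ?thesis unfolding Dsq_def by (simp add: of_nat_diff power2_commute)
qed

lemma expA: assumes "k \<le> 2*n" shows "k*(k-1) + (2*n-1)*(2*n-k) = n*(2*n-1) + n*(n-1) + Dsq n k"
proof (cases "n = 0")
  case True then show ?thesis using assms by (simp add: Dsq_def)
next
  case False
  have h2: "int ((2*n-1)*(2*n-k)) = (2*int n - 1)*(2*int n - int k)" using False assms by (simp add: of_nat_diff)
  have h3: "int (n*(2*n-1)) = int n * (2*int n - 1)" using False by (simp add: of_nat_diff)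
  have "int (k*(k-1) + (2*n-1)*(2*n-k)) = int (n*(2*n-1) + n*(n-1) + Dsq n k)"
    unfolding of_nat_add int_mul_pred h2 h3 int_Dsq by (simp add: algebra_simps power2_eq_square)
  then show ?thesis by linarith
qed

lemma int_Dt2: "int (2 * Dt n k) = (int k - int n) * (int k - int n + 1)"
proof (cases "n \<le> k")
  case True
  then obtain b where k: "k = n + b" using le_Suc_ex by blast
  have "even (b*(b+1))" by simp
  then have "2 * Dt n k = b*(b+1)" unfolding Dt_def k by simp
  then show ?thesis unfolding k by (simp add: algebra_simps)
next
  case False
  then obtain c where n: "n = Suc (k + c)" using less_imp_Suc_add[of k n] by auto
  have "even (Suc c * c)" by simp
  then have "2 * Dt n k = Suc c * c" unfolding Dt_def n by simp
  then show ?thesis unfolding n by (simp add: algebra_simps)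
qed

lemma expT: assumes "k \<le> 2*n" shows "k*(k-1) div 2 + (n-1)*(2*n-k) = n*(n-1) div 2 + (n-1)*n + Dt n k"
proof (cases "n = 0")
  case True then show ?thesis using assms by (simp add: Dt_def)
next
  case False
  have e1: "2 * (k*(k-1) div 2) = k*(k-1)" by (cases k) simp_all
  have e2: "2 * (n*(n-1) div 2) = n*(n-1)" by (cases n) simp_all
  have h2: "int ((n-1)*(2*n-k)) = (int n - 1)*(2*int n - int k)" using False assms by (simp add: of_nat_diff)
  have h3: "int ((n-1)*n) = (int n - 1) * int n" using False by (simp add: of_nat_diff)
  have l: "int (2 * (k*(k-1) div 2) + 2 * ((n-1)*(2*n-k))) = int k * (int k - 1) + 2*((int n - 1)*(2*int n - int k))"
    unfolding e1 of_nat_add int_mul_pred using False assms by (simp add: of_nat_diff)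
  have r: "int (2*(n*(n-1) div 2) + 2 * ((n-1)*n) + 2 * Dt n k) = int n*(int n - 1) + 2*((int n - 1)*int n) + (int k - int n)*(int k - int n + 1)"
  proof -
    have e2': "2 * int (n*(n-1) div 2) = int n * (int n - 1)"
    proof -
      have "int (2 * (n*(n-1) div 2)) = int (n*(n-1))" using e2 by (rule arg_cong)
      then have "2 * int (n*(n-1) div 2) = int (n*(n-1))" by (metis of_nat_mult of_nat_numeral)
      then show ?thesis using int_mul_pred[of n] by simp
    qed
    have h3': "int (n - Suc 0) = int n - 1" using False by (simp add: of_nat_diff)
    show ?thesis using e2' h3' by (simp only: of_nat_add int_Dt2) simp
  qed
  have "int k * (int k - 1) + 2*((int n - 1)*(2*int n - int k)) = int n*(int n - 1) + 2*((int n - 1)*int n) + (int k - int n)*(int k - int n + 1)"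
    by (simp add: algebra_simps)
  then have "int (2 * (k*(k-1) div 2) + 2 * ((n-1)*(2*n-k))) = int (2*(n*(n-1) div 2) + 2 * ((n-1)*n) + 2 * Dt n k)"
    using l r by simp
  then show ?thesis by linarith
qed

lemma sum_double_lessThan: "(\<Sum>i<(n::nat). 2*i) = n*(n-1)"
  by (induction n) (auto simp: algebra_simps)

lemma sum_lessThan_id: "(\<Sum>i<(n::nat). i) = n*(n-1) div 2"
proof -
  have "(\<Sum>i<n. 2*i) = 2 * (\<Sum>i<n. i)" by (simp add: sum_distrib_left)
  then show ?thesis using sum_double_lessThan[of n] by simp
qed

lemma prod_split_half:
  fixes f :: "nat \<Rightarrow> 'a::comm_monoid_mult"
  shows "(\<Prod>i<2*n. f i) = (\<Prod>i<n. f i) * (\<Prod>i<n. f (i + n))"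
proof -
  have "(\<Prod>i<2*n. f i) = (\<Prod>i\<in>{0..<n}. f i) * (\<Prod>i\<in>{n..<2*n}. f i)"
    by (simp add: prod.atLeastLessThan_concat atLeast0LessThan[symmetric])
  also have "(\<Prod>i\<in>{n..<2*n}. f i) = (\<Prod>i\<in>{0..<n}. f (i + n))"
    using prod.shift_bounds_nat_ivl[of f 0 n n] by (simp add: mult_2)
  finally show ?thesis by (simp add: atLeast0LessThan)
qed

lemma jtp_w:
  fixes w z :: "'a::comm_ring_1"
  shows "w^(n*(2*n-1) + n*(n-1)) * ((\<Prod>j<n. 1 + z*w^(2*j+1)) * (\<Prod>j<n. z + w^(2*j+1)))
    = (\<Sum>k\<le>2*n. qb (w^2) (2*n) k * z^k * w^(n*(2*n-1) + n*(n-1) + Dsq n k))"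
proof (cases "n = 0")
  case True then show ?thesis by (simp add: Dsq_def)
next
  case False
  let ?f = "\<lambda>i. w^(2*n-1) + z*(w^2)^i"
  have R: "(\<Prod>i<2*n. ?f i) = (\<Sum>k\<le>2*n. qb (w^2) (2*n) k * (w^2)^(k*(k-1) div 2) * z^k * (w^(2*n-1))^(2*n-k))"
    by (rule rothe)
  have R2: "(\<Sum>k\<le>2*n. qb (w^2) (2*n) k * (w^2)^(k*(k-1) div 2) * z^k * (w^(2*n-1))^(2*n-k))
      = (\<Sum>k\<le>2*n. qb (w^2) (2*n) k * z^k * w^(n*(2*n-1) + n*(n-1) + Dsq n k))"
  proof (rule sum.cong[OF refl])
    fix k assume "k \<in> {..2*n}"
    then have k: "k \<le> 2*n" by simp
    have ev: "2 * (k*(k-1) div 2) = k*(k-1)" by (cases k) simp_all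
    have "(w^2)^(k*(k-1) div 2) * (w^(2*n-1))^(2*n-k) = w^(k*(k-1) + (2*n-1)*(2*n-k))"
      by (simp only: power_mult[symmetric] ev power_add)
    also have "\<dots> = w^(n*(2*n-1) + n*(n-1) + Dsq n k)" using expA[OF k] by simp
    finally show "qb (w^2) (2*n) k * (w^2)^(k*(k-1) div 2) * z^k * (w^(2*n-1))^(2*n-k)
        = qb (w^2) (2*n) k * z^k * w^(n*(2*n-1) + n*(n-1) + Dsq n k)"
      by (simp add: ac_simps)
  qed
  have L1: "(\<Prod>i<n. ?f (i + n)) = w^((2*n-1)*n) * (\<Prod>j<n. 1 + z*w^(2*j+1))"
  proof -
    have "?f (i + n) = w^(2*n-1) * (1 + z*w^(2*i+1))" for i
    proof -
      have "2*n - 1 + (2*i+1) = 2*(i+n)" using False by simp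
      then have "(w^2)^(i+n) = w^(2*n-1) * w^(2*i+1)"
        by (metis power_add power_mult)
      then show ?thesis by (simp add: algebra_simps)
    qed
    then show ?thesis by (simp add: prod.distrib power_mult)
  qed
  have L2: "(\<Prod>i<n. ?f i) = w^(n*(n-1)) * (\<Prod>j<n. z + w^(2*j+1))"
  proof -
    have "?f i = w^(2*i) * (z + w^(2*(n - Suc i)+1))" if "i < n" for i
    proof -
      have "2*i + (2*(n - Suc i)+1) = 2*n-1" using that by simp
      then have e: "w^(2*n-1) = w^(2*i) * w^(2*(n - Suc i)+1)"
        by (metis power_add)
      have e2: "(w^2)^i = w^(2*i)" by (rule power_mult[symmetric])
      show ?thesis unfolding e2 e by (simp only: distrib_left mult_ac add_ac)
    qed
    then have "(\<Prod>i<n. ?f i) = (\<Prod>i<n. w^(2*i)) * (\<Prod>i<n. z + w^(2*(n - Suc i)+1))"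
      by (simp add: prod.distrib)
    also have "(\<Prod>i<n. w^(2*i)) = w^(n*(n-1))"
      by (simp add: power_sum[symmetric] sum_double_lessThan)
    also have "(\<Prod>i<n. z + w^(2*(n - Suc i)+1)) = (\<Prod>j<n. z + w^(2*j+1))"
      by (rule prod.nat_diff_reindex)
    finally show ?thesis .
  qed
  have "(\<Prod>i<2*n. ?f i) = w^(n*(2*n-1) + n*(n-1)) * ((\<Prod>j<n. 1 + z*w^(2*j+1)) * (\<Prod>j<n. z + w^(2*j+1)))"
    unfolding prod_split_half L1 L2 by (simp only: power_add mult_ac)
  then show ?thesis using R R2 by simp
qed

lemma jtp_t:
  fixes u :: "'a::comm_ring_1"
  shows "u^(n*(n-1) div 2 + (n-1)*n) * ((\<Prod>j<n. 1 + u^j) * (\<Prod>j<n. 1 + u^(j+1)))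
    = (\<Sum>k\<le>2*n. qb u (2*n) k * u^(n*(n-1) div 2 + (n-1)*n + Dt n k))"
proof (cases "n = 0")
  case True then show ?thesis by (simp add: Dt_def)
next
  case False
  let ?f = "\<lambda>i. u^(n-1) + 1*u^i"
  have R: "(\<Prod>i<2*n. ?f i) = (\<Sum>k\<le>2*n. qb u (2*n) k * u^(k*(k-1) div 2) * 1^k * (u^(n-1))^(2*n-k))"
    by (rule rothe)
  have R2: "(\<Sum>k\<le>2*n. qb u (2*n) k * u^(k*(k-1) div 2) * 1^k * (u^(n-1))^(2*n-k))
      = (\<Sum>k\<le>2*n. qb u (2*n) k * u^(n*(n-1) div 2 + (n-1)*n + Dt n k))"
  proof (rule sum.cong[OF refl])
    fix k assume "k \<in> {..2*n}"
    then have k: "k \<le> 2*n" by simp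
    have "u^(k*(k-1) div 2) * (u^(n-1))^(2*n-k) = u^(k*(k-1) div 2 + (n-1)*(2*n-k))"
      by (simp add: power_mult[symmetric] power_add)
    also have "\<dots> = u^(n*(n-1) div 2 + (n-1)*n + Dt n k)" using expT[OF k] by simp
    finally show "qb u (2*n) k * u^(k*(k-1) div 2) * 1^k * (u^(n-1))^(2*n-k)
        = qb u (2*n) k * u^(n*(n-1) div 2 + (n-1)*n + Dt n k)"
      by (simp add: ac_simps)
  qed
  have L1: "(\<Prod>i<n. ?f (i + n)) = u^((n-1)*n) * (\<Prod>j<n. 1 + u^(j+1))"
  proof -
    have "?f (i + n) = u^(n-1) * (1 + u^(i+1))" for i
    proof -
      have "n - 1 + (i+1) = i + n" using False by simp
      then have "u^(i+n) = u^(n-1) * u^(i+1)"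
        by (metis power_add)
      then show ?thesis by (simp add: algebra_simps)
    qed
    then show ?thesis by (simp add: prod.distrib power_mult)
  qed
  have L2: "(\<Prod>i<n. ?f i) = u^(n*(n-1) div 2) * (\<Prod>j<n. 1 + u^j)"
  proof -
    have "?f i = u^i * (1 + u^(n - Suc i))" if "i < n" for i
    proof -
      have "u^(n-1) = u^i * u^(n - Suc i)"
        using that by (simp add: power_add[symmetric])
      then show ?thesis by (simp add: algebra_simps)
    qed
    then have "(\<Prod>i<n. ?f i) = (\<Prod>i<n. u^i) * (\<Prod>i<n. 1 + u^(n - Suc i))"
      by (simp add: prod.distrib)
    also have "(\<Prod>i<n. u^i) = u^(n*(n-1) div 2)"
      by (simp add: power_sum[symmetric] sum_lessThan_id)
    also have "(\<Prod>i<n. 1 + u^(n - Suc i)) = (\<Prod>j<n. 1 + u^j)"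
      by (rule prod.nat_diff_reindex)
    finally show ?thesis .
  qed
  have "(\<Prod>i<2*n. ?f i) = u^(n*(n-1) div 2 + (n-1)*n) * ((\<Prod>j<n. 1 + u^j) * (\<Prod>j<n. 1 + u^(j+1)))"
    unfolding prod_split_half L1 L2 by (simp only: power_add mult_ac)
  then show ?thesis using R R2 by simp
qed

lemma theta_limit:
  fixes s :: "nat \<Rightarrow> int" and D :: "nat \<Rightarrow> nat"
  assumes e: "e \<ge> 1" and hD: "\<And>k. k \<le> 2*n \<Longrightarrow> D k \<le> N \<Longrightarrow> N \<le> k \<and> N \<le> 2*n - k" and M: "N \<le> M"
  shows "(pf (fps_X^e) M * (\<Sum>k\<le>2*n. fps_const (s k) * qb (fps_X^e) (2*n) k * fps_X^(D k))) $ N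
       = (\<Sum>k\<le>2*n. if D k = N then s k else 0)"
proof -
  have "pf (fps_X^e) M * (\<Sum>k\<le>2*n. fps_const (s k) * qb (fps_X^e) (2*n) k * fps_X^(D k))
      = (\<Sum>k\<le>2*n. fps_const (s k) * (fps_X^(D k) * (qb (fps_X^e) (2*n) k * pf (fps_X^e) M)))"
    by (simp add: sum_distrib_left ac_simps)
  also have "\<dots> $ N = (\<Sum>k\<le>2*n. if D k = N then s k else 0)"
    unfolding fps_sum_nth
  proof (rule sum.cong[OF refl])
    fix k assume "k \<in> {..2*n}"
    then have k: "k \<le> 2*n" by simp
    show "(fps_const (s k) * (fps_X^(D k) * (qb (fps_X^e) (2*n) k * pf (fps_X^e) M))) $ N = (if D k = N then s k else 0)"
    proof (cases "D k \<le> N")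
      case True
      with hD[OF k] have "N \<le> k" "N \<le> 2*n - k" by auto
      then have "eqm (Suc N) (qb (fps_X^e :: int fps) (2*n) k * pf (fps_X^e) M) 1"
        using e k M by (intro qb_trunc) auto
      then have "(qb (fps_X^e :: int fps) (2*n) k * pf (fps_X^e) M) $ (N - D k) = (1::int fps) $ (N - D k)"
        unfolding eqm_def by auto
      then show ?thesis using True by (auto simp: fps_X_power_mult_nth)
    next
      case False
      then show ?thesis by (auto simp: fps_X_power_mult_nth)
    qed
  qed
  finally show ?thesis .
qed

lemma sum_split_mid:
  fixes g :: "nat \<Rightarrow> 'a::comm_monoid_add"
  shows "(\<Sum>k\<le>2*n. g k) = g n + (\<Sum>b\<in>{1..n}. g (n+b)) + (\<Sum>b\<in>{1..n}. g (n-b))"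
proof -
  have U: "{..2*n} = ({..<n} \<union> {n}) \<union> {n+1..2*n}" by auto
  have "(\<Sum>k\<le>2*n. g k) = (\<Sum>k<n. g k) + g n + (\<Sum>k\<in>{n+1..2*n}. g k)"
    unfolding U by (subst sum.union_disjoint; auto simp: add_ac)
  also have "(\<Sum>k\<in>{n+1..2*n}. g k) = (\<Sum>b\<in>{1..n}. g (n+b))"
    using sum.shift_bounds_cl_nat_ivl[of g 1 n n] by (simp add: mult_2 add.commute)
  also have "(\<Sum>k<n. g k) = (\<Sum>b\<in>{1..n}. g (n-b))"
    by (rule sum.reindex_bij_witness[where i="\<lambda>b. n - b" and j="\<lambda>k. n - k"]) auto
  finally show ?thesis by (simp add: ac_simps)
qed

lemma sum_indicator_unique:
  assumes "finite A" "\<And>x y. x \<in> A \<Longrightarrow> y \<in> A \<Longrightarrow> P x \<Longrightarrow> P y \<Longrightarrow> x = y"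
  shows "(\<Sum>b\<in>A. if P b then 1 else 0) = (if \<exists>b\<in>A. P b then 1 else (0::int))"
proof (cases "\<exists>b\<in>A. P b")
  case True
  then obtain b0 where b0: "b0 \<in> A" "P b0" by auto
  have "(\<Sum>b\<in>A. if P b then 1 else 0) = (\<Sum>b\<in>A. if b = b0 then 1 else (0::int))"
    by (rule sum.cong) (use assms b0 in auto)
  also have "\<dots> = 1" using b0 assms(1) by simp
  finally show ?thesis using True by simp
next
  case False then show ?thesis by simp
qed

definition Od :: "nat \<Rightarrow> nat \<Rightarrow> int fps" where
  "Od k n = (\<Prod>j<n. 1 - fps_X^(k*(2*j+1)))"
definition Op :: "nat \<Rightarrow> int fps" where
  "Op n = (\<Prod>j<n. 1 + fps_X^(2*(2*j+1)))"
definition Pp :: "nat \<Rightarrow> nat \<Rightarrow> int fps" where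
  "Pp d n = (\<Prod>j<n. 1 + fps_X^(d*(j+1)))"
definition T :: "int fps" where
  "T = Abs_fps (\<lambda>N. \<Sum>b\<in>{1..N}. if b^2 = N then (-1)^b else 0)"
definition S :: "int fps" where
  "S = Abs_fps (\<lambda>N. \<Sum>b\<in>{1..N}. if 2*b^2 = N then 1 else 0)"
definition psid :: "nat \<Rightarrow> int fps" where
  "psid d = Abs_fps (\<lambda>N. if \<exists>m. N = d*(m*(m+1) div 2) then 1 else 0)"

lemma jtp_fps:
  fixes z :: "int fps"
  shows "(\<Prod>j<n. 1 + z*fps_X^(d*(2*j+1))) * (\<Prod>j<n. z + fps_X^(d*(2*j+1)))
    = (\<Sum>k\<le>2*n. qb (fps_X^(2*d)) (2*n) k * z^k * fps_X^(d * Dsq n k))"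
proof -
  let ?E = "n*(2*n-1) + n*(n-1)"
  have "(fps_X^d)^?E * ((\<Prod>j<n. 1 + z*(fps_X^d)^(2*j+1)) * (\<Prod>j<n. z + (fps_X^d)^(2*j+1)))
    = (\<Sum>k\<le>2*n. qb ((fps_X^d)^2) (2*n) k * z^k * (fps_X^d)^(?E + Dsq n k))"
    by (rule jtp_w)
  then have "fps_X^(d*?E) * ((\<Prod>j<n. 1 + z*fps_X^(d*(2*j+1))) * (\<Prod>j<n. z + fps_X^(d*(2*j+1))))
    = fps_X^(d*?E) * (\<Sum>k\<le>2*n. qb (fps_X^(2*d)) (2*n) k * z^k * fps_X^(d * Dsq n k))"
    by (simp add: power_mult[symmetric] add_mult_distrib2 power_add sum_distrib_left ac_simps)
  then show ?thesis by simp
qed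

lemma jtp_fps_t:
  assumes "n \<ge> 1"
  shows "fps_const 2 * Pp d (n-1) * Pp d n = (\<Sum>k\<le>2*n. qb (fps_X^d) (2*n) k * fps_X^(d * Dt n k))"
proof -
  let ?E = "n*(n-1) div 2 + (n-1)*n"
  have "(fps_X^d)^?E * ((\<Prod>j<n. 1 + (fps_X^d)^j) * (\<Prod>j<n. 1 + (fps_X^d)^(j+1)))
    = (\<Sum>k\<le>2*n. qb (fps_X^d) (2*n) k * (fps_X^d :: int fps)^(?E + Dt n k))"
    by (rule jtp_t)
  then have "fps_X^(d*?E) * ((\<Prod>j<n. 1 + fps_X^(d*j)) * Pp d n)
    = fps_X^(d*?E) * (\<Sum>k\<le>2*n. qb (fps_X^d) (2*n) k * (fps_X^(d * Dt n k) :: int fps))"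
    unfolding Pp_def by (simp add: power_mult[symmetric] add_mult_distrib2 power_add sum_distrib_left ac_simps)
  then have *: "(\<Prod>j<n. 1 + fps_X^(d*j)) * Pp d n = (\<Sum>k\<le>2*n. qb (fps_X^d) (2*n) k * (fps_X^(d * Dt n k) :: int fps))"
    by simp
  obtain m where n: "n = Suc m" using assms by (cases n) auto
  have "(\<Prod>j<n. 1 + fps_X^(d*j)) = (fps_const 2 :: int fps) * Pp d (n-1)"
    unfolding n Pp_def prod.lessThan_Suc_shift by (simp add: fps_numeral_fps_const)
  then show ?thesis using * by simp
qed

lemma neg1_pow_fps: "(-1::int fps)^m = fps_const ((-1)^m)"
proof -
  have "fps_const (-1) = (-1 :: int fps)" by (metis fps_const_1_eq_1 fps_const_neg)
  then show ?thesis by (metis fps_const_power)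
qed

lemma le_sq_nat: "(x::nat) \<le> x^2" by (cases x) (auto simp: power2_eq_square)

lemma Dsq_bound:
  assumes "k \<le> 2*n" "2*N+1 \<le> n" "Dsq n k \<le> N"
  shows "N \<le> k \<and> N \<le> 2*n - k"
proof (cases "n \<le> k")
  case True
  then have "k - n \<le> N" using assms(3) le_sq_nat[of "k-n"] unfolding Dsq_def by auto
  then show ?thesis using True assms(1,2) by auto
next
  case False
  then have "n - k \<le> N" using assms(3) le_sq_nat[of "n-k"] unfolding Dsq_def by auto
  then show ?thesis using False assms(1,2) by auto
qed

lemma tri_ge: "(x::nat) \<le> x*(x+1) div 2"
proof (cases x)
  case (Suc y)
  have "2 * x \<le> x*(x+1)" using Suc by simp
  then show ?thesis by linarith
qed simp

lemma tri_ge': "(x::nat) - 1 \<le> x*(x-1) div 2"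
proof (cases x)
  case (Suc y)
  then show ?thesis using tri_ge[of y] by (simp add: algebra_simps)
qed simp

lemma Dt_bound:
  assumes "k \<le> 2*n" "2*N+1 \<le> n" "Dt n k \<le> N"
  shows "N \<le> k \<and> N \<le> 2*n - k"
proof (cases "n \<le> k")
  case True
  then have "k - n \<le> N" using assms(3) tri_ge[of "k-n"] unfolding Dt_def by auto
  then show ?thesis using True assms(1,2) by auto
next
  case False
  then have "n - k - 1 \<le> N" using assms(3) tri_ge'[of "n-k"] unfolding Dt_def by auto
  then show ?thesis using False assms(1,2) by auto
qed

lemma sum_ext_range:
  fixes f :: "nat \<Rightarrow> int"
  assumes "N \<le> n" "\<And>b. N < b \<Longrightarrow> f b = 0"
  shows "(\<Sum>b\<in>{1..n}. f b) = (\<Sum>b\<in>{1..N}. f b)"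
  by (rule sum.mono_neutral_right) (use assms in auto)

lemma neg1_even_add: "(-1::int)^(2*a + b) = (-1)^b"
  by (simp add: power_add power_mult)

lemma caseA:
  assumes n: "2*N+1 \<le> n" and M: "N \<le> M"
  shows "(pf (fps_X^2) M * Od 1 n ^ 2) $ N = (1 + fps_const 2 * T) $ N"
proof -
  have "(\<Prod>j<n. 1 + (-1)*fps_X^(1*(2*j+1))) * (\<Prod>j<n. (-1) + fps_X^(1*(2*j+1)))
    = (\<Sum>k\<le>2*n. qb (fps_X^(2*1)) (2*n) k * (-1::int fps)^k * fps_X^(1 * Dsq n k))"
    by (rule jtp_fps)
  moreover have "(\<Prod>j<n. (-1) + fps_X^(1*(2*j+1))) = (-1)^n * Od 1 n"
  proof -
    have "(\<Prod>j<n. (-1::int fps) + fps_X^(1*(2*j+1))) = (\<Prod>j<n. - (1 - fps_X^(1*(2*j+1))))" by simp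
    also have "\<dots> = (-1)^n * Od 1 n" unfolding prod_uminus Od_def by simp
    finally show ?thesis .
  qed
  moreover have "(\<Prod>j<n. 1 + (-1)*fps_X^(1*(2*j+1))) = Od 1 n" unfolding Od_def by simp
  ultimately have "(-1)^n * Od 1 n ^ 2 = (\<Sum>k\<le>2*n. qb (fps_X^2) (2*n) k * (-1::int fps)^k * fps_X^(Dsq n k))"
    by (simp add: power2_eq_square ac_simps)
  then have "(-1)^n * ((-1)^n * Od 1 n ^ 2) = (-1)^n * (\<Sum>k\<le>2*n. qb (fps_X^2) (2*n) k * (-1::int fps)^k * fps_X^(Dsq n k))"
    by simp
  moreover have J1: "(-1::int fps)^n * (qb (fps_X^2) (2*n) k * (-1)^k * fps_X^(Dsq n k))
      = fps_const ((-1)^(n+k)) * qb (fps_X^2) (2*n) k * fps_X^(Dsq n k)" for k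
  proof -
    have "(-1::int fps)^n * (-1)^k = fps_const ((-1)^(n+k))" unfolding power_add[symmetric] by (rule neg1_pow_fps)
    moreover have "(-1::int fps)^n * (qb (fps_X^2) (2*n) k * (-1)^k * fps_X^(Dsq n k))
       = ((-1)^n * (-1)^k) * qb (fps_X^2) (2*n) k * fps_X^(Dsq n k)" by (simp only: mult_ac)
    ultimately show ?thesis by simp
  qed
  moreover have J2: "(-1::int fps)^n * (-1)^n = 1"
  proof -
    have "(-1::int)^(n+n) = 1" using neg1_even_add[of n 0] by (simp add: mult_2)
    then show ?thesis unfolding power_add[symmetric] neg1_pow_fps by simp
  qed
  ultimately have J: "Od 1 n ^ 2 = (\<Sum>k\<le>2*n. fps_const ((-1)^(n+k)) * qb (fps_X^2) (2*n) k * fps_X^(Dsq n k))"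
    by (simp only: sum_distrib_left mult.assoc[symmetric] J2 mult_1)
  have "(pf (fps_X^2) M * Od 1 n ^ 2) $ N = (\<Sum>k\<le>2*n. if Dsq n k = N then (-1)^(n+k) else 0)"
    unfolding J
  proof (rule theta_limit[OF _ _ M])
    fix k assume "k \<le> 2*n" "Dsq n k \<le> N"
    then show "N \<le> k \<and> N \<le> 2*n - k" using Dsq_bound n by blast
  qed simp
  also have "\<dots> = (if N = 0 then 1 else 0) + 2 * T $ N"
  proof -
    let ?g = "\<lambda>k. if Dsq n k = N then (-1::int)^(n+k) else 0"
    let ?h = "\<lambda>b. if b^2 = N then (-1::int)^b else 0"
    have g0: "?g n = (if N = 0 then 1 else 0)" by (auto simp: Dsq_def neg1_even_add[of n 0, simplified mult_2])
    have g1: "(\<Sum>b\<in>{1..n}. ?g (n+b)) = (\<Sum>b\<in>{1..n}. ?h b)"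
    proof (rule sum.cong[OF refl])
      fix b assume "b \<in> {1..n}"
      have eq: "n + (n + b) = 2*n + b" by simp
      have e: "(-1::int)^(n + (n+b)) = (-1)^b" unfolding eq by (rule neg1_even_add)
      show "?g (n+b) = ?h b" by (simp add: Dsq_def e)
    qed
    have g2: "(\<Sum>b\<in>{1..n}. ?g (n-b)) = (\<Sum>b\<in>{1..n}. ?h b)"
    proof (rule sum.cong[OF refl])
      fix b assume b: "b \<in> {1..n}"
      then have 1: "n + (n - b) = 2*(n-b) + b" and 2: "\<not> n \<le> n - b" "n - (n - b) = b" by auto
      have e: "(-1::int)^(n + (n-b)) = (-1)^b" unfolding 1 by (rule neg1_even_add)
      show "?g (n-b) = ?h b" using 2 e by (simp add: Dsq_def)
    qed
    have h: "(\<Sum>b\<in>{1..n}. ?h b) = T $ N"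
    proof -
      have "N < b \<Longrightarrow> b^2 \<noteq> N" for b using le_sq_nat[of b] by linarith
      then show ?thesis unfolding T_def fps_nth_Abs_fps
        by (intro sum_ext_range) (use n in \<open>auto\<close>)
    qed
    show ?thesis unfolding sum_split_mid g0 g1 g2 h by simp
  qed
  also have "\<dots> = (1 + fps_const 2 * T) $ N" by simp
  finally show ?thesis .
qed

lemma caseB:
  assumes n: "2*N+1 \<le> n" and M: "N \<le> M"
  shows "(pf (fps_X^4) M * Op n ^ 2) $ N = (1 + fps_const 2 * S) $ N"
proof -
  have "(\<Prod>j<n. 1 + 1*fps_X^(2*(2*j+1))) * (\<Prod>j<n. 1 + fps_X^(2*(2*j+1)))
    = (\<Sum>k\<le>2*n. qb (fps_X^(2*2)) (2*n) k * (1::int fps)^k * fps_X^(2 * Dsq n k))"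
    by (rule jtp_fps)
  then have J: "Op n ^ 2 = (\<Sum>k\<le>2*n. fps_const 1 * qb (fps_X^4) (2*n) k * fps_X^(2 * Dsq n k))"
    unfolding Op_def by (simp add: power2_eq_square)
  have "(pf (fps_X^4) M * Op n ^ 2) $ N = (\<Sum>k\<le>2*n. if 2 * Dsq n k = N then 1 else 0)"
    unfolding J
  proof (rule theta_limit[OF _ _ M])
    fix k assume k: "k \<le> 2*n" and h: "2 * Dsq n k \<le> N"
    from h have "Dsq n k \<le> N" by simp
    then show "N \<le> k \<and> N \<le> 2*n - k" using Dsq_bound[OF k n] by blast
  qed simp
  also have "\<dots> = (if N = 0 then 1 else 0) + 2 * S $ N"
  proof -
    let ?g = "\<lambda>k. if 2 * Dsq n k = N then (1::int) else 0"
    let ?h = "\<lambda>b. if 2*b^2 = N then (1::int) else 0"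
    have g0: "?g n = (if N = 0 then 1 else 0)" by (auto simp: Dsq_def)
    have g1: "(\<Sum>b\<in>{1..n}. ?g (n+b)) = (\<Sum>b\<in>{1..n}. ?h b)"
      by (rule sum.cong[OF refl]) (simp add: Dsq_def)
    have g2: "(\<Sum>b\<in>{1..n}. ?g (n-b)) = (\<Sum>b\<in>{1..n}. ?h b)"
    proof (rule sum.cong[OF refl])
      fix b assume b: "b \<in> {1..n}"
      then have "\<not> n \<le> n - b" "n - (n - b) = b" by auto
      then show "?g (n-b) = ?h b" by (simp add: Dsq_def)
    qed
    have h: "(\<Sum>b\<in>{1..n}. ?h b) = S $ N"
    proof -
      have "N < b \<Longrightarrow> 2*b^2 \<noteq> N" for b using le_sq_nat[of b] by linarith
      then show ?thesis unfolding S_def fps_nth_Abs_fps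
        by (intro sum_ext_range) (use n in \<open>auto\<close>)
    qed
    show ?thesis unfolding sum_split_mid g0 g1 g2 h by simp
  qed
  also have "\<dots> = (1 + fps_const 2 * S) $ N" by simp
  finally show ?thesis .
qed

lemma tri_strict: "(x::nat) < y \<Longrightarrow> x*(x+1) div 2 < y*(y+1) div 2"
proof -
  assume xy: "x < y"
  have "(x+1)*(x+2) \<le> y*(y+1)" using xy by (intro mult_le_mono) auto
  then have "x*(x+1) + 2 \<le> y*(y+1)" by (simp add: algebra_simps)
  then have "(x*(x+1) + 2) div 2 \<le> y*(y+1) div 2" by (rule div_le_mono)
  moreover have "(x*(x+1) + 2) div 2 = x*(x+1) div 2 + 1" by simp
  ultimately show ?thesis by simp
qed

lemma tri_inj: assumes "(x::nat)*(x+1) div 2 = y*(y+1) div 2" shows "x = y"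
proof (rule ccontr)
  assume "x \<noteq> y"
  then have "x < y \<or> y < x" by linarith
  then show False using tri_strict[of x y] tri_strict[of y x] assms by auto
qed

lemma psid_sum:
  assumes d: "d \<ge> 1" and n: "N \<le> n"
  shows "(\<Sum>b\<in>{0..n}. if d*(b*(b+1) div 2) = N then 1 else 0) = psid d $ N"
proof -
  have "(\<Sum>b\<in>{0..n}. if d*(b*(b+1) div 2) = N then 1 else 0) = (if \<exists>b\<in>{0..n}. d*(b*(b+1) div 2) = N then 1 else (0::int))"
  proof (rule sum_indicator_unique)
    fix x y assume "d*(x*(x+1) div 2) = N" "d*(y*(y+1) div 2) = N"
    then have "d*(x*(x+1) div 2) = d*(y*(y+1) div 2)" by simp
    then have "x*(x+1) div 2 = y*(y+1) div 2" using d by simp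
    then show "x = y" by (rule tri_inj)
  qed simp
  also have "(\<exists>b\<in>{0..n}. d*(b*(b+1) div 2) = N) \<longleftrightarrow> (\<exists>m. N = d*(m*(m+1) div 2))"
  proof
    assume "\<exists>m. N = d*(m*(m+1) div 2)"
    then obtain m where m: "N = d*(m*(m+1) div 2)" by auto
    have "m \<le> m*(m+1) div 2" by (rule tri_ge)
    also have "\<dots> \<le> d*(m*(m+1) div 2)" using d by simp
    finally have "m \<le> n" using m n by simp
    then show "\<exists>b\<in>{0..n}. d*(b*(b+1) div 2) = N" using m by auto
  qed auto
  finally show ?thesis unfolding psid_def by simp
qed

lemma caseC:
  assumes d: "d \<ge> 1" and n: "2*N+1 \<le> n" and M: "N \<le> M"
  shows "(pf (fps_X^d) M * (fps_const 2 * Pp d (n-1) * Pp d n)) $ N = 2 * psid d $ N"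
proof -
  have J: "fps_const 2 * Pp d (n-1) * Pp d n = (\<Sum>k\<le>2*n. fps_const 1 * qb (fps_X^d) (2*n) k * fps_X^(d * Dt n k))"
    using jtp_fps_t[of n d] n by simp
  have "(pf (fps_X^d) M * (fps_const 2 * Pp d (n-1) * Pp d n)) $ N = (\<Sum>k\<le>2*n. if d * Dt n k = N then 1 else 0)"
    unfolding J
  proof (rule theta_limit[OF d _ M])
    fix k assume "k \<le> 2*n" "d * Dt n k \<le> N"
    moreover have "Dt n k \<le> d * Dt n k" using d by simp
    ultimately show "N \<le> k \<and> N \<le> 2*n - k" using Dt_bound n by (meson order_trans)
  qed
  also have "\<dots> = 2 * psid d $ N"
  proof -
    let ?g = "\<lambda>k. if d * Dt n k = N then (1::int) else 0"
    let ?h = "\<lambda>b. if d*(b*(b+1) div 2) = N then (1::int) else 0"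
    have g0: "?g n = ?h 0" by (auto simp: Dt_def)
    have g1: "(\<Sum>b\<in>{1..n}. ?g (n+b)) = (\<Sum>b\<in>{1..n}. ?h b)"
      by (rule sum.cong[OF refl]) (simp add: Dt_def)
    have g2: "(\<Sum>b\<in>{1..n}. ?g (n-b)) = (\<Sum>b\<in>{1..n}. ?h (b-1))"
    proof (rule sum.cong[OF refl])
      fix b assume b: "b \<in> {1..n}"
      then have "\<not> n \<le> n - b" "n - (n - b) = b" by auto
      moreover have "b * (b - 1) = (b - 1) * (b - 1 + 1)" using b by simp
      ultimately show "?g (n-b) = ?h (b-1)" unfolding Dt_def by (simp only: if_False)
    qed
    obtain n' where n': "n = Suc n'" using n by (cases n) auto
    have s1: "?h 0 + (\<Sum>b\<in>{1..n}. ?h b) = psid d $ N"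
    proof -
      have "?h 0 + (\<Sum>b\<in>{1..n}. ?h b) = (\<Sum>b\<in>{0..n}. ?h b)"
        by (simp add: sum.atLeast_Suc_atMost[of 0 n] atLeastSucAtMost_greaterThanAtMost)
      also have "\<dots> = psid d $ N" using d n by (intro psid_sum) auto
      finally show ?thesis .
    qed
    have s2: "(\<Sum>b\<in>{1..n}. ?h (b-1)) = psid d $ N"
    proof -
      have "(\<Sum>b\<in>{1..n}. ?h (b-1)) = (\<Sum>b\<in>{0..n'}. ?h b)"
        unfolding n' using sum.shift_bounds_cl_Suc_ivl[of "\<lambda>b. ?h (b-1)" 0 n'] by simp
      also have "\<dots> = psid d $ N" using d n n' by (intro psid_sum) auto
      finally show ?thesis .
    qed
    show ?thesis unfolding sum_split_mid g0 g1 g2 using s1 s2 by simp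
  qed
  finally show ?thesis .
qed

lemma ell_nth: "ell k $ i = pf (fps_X^k) i $ i"
  unfolding ell_def pf_def by (simp add: power_mult)

lemma ell_trunc:
  assumes "k \<ge> 1" "N \<le> M"
  shows "eqm (Suc N) (ell k) (pf (fps_X^k) M)"
  unfolding eqm_def
proof (intro allI impI)
  fix i assume "i < Suc N"
  then have "eqm (Suc i) (pf (fps_X^k :: int fps) M) (pf (fps_X^k) i)"
    using assms by (intro pf_trunc) auto
  then show "ell k $ i = pf (fps_X^k) M $ i" unfolding ell_nth eqm_def by simp
qed

lemma pf_split: "pf (fps_X^k :: int fps) (2*M) = pf (fps_X^(2*k)) M * Od k M"
proof (induction M)
  case 0 then show ?case by (simp add: Od_def)
next
  case (Suc M)
  have a: "(fps_X^k :: int fps)^(Suc (2*M)) = fps_X^(k*(2*M+1))" by (simp only: power_mult[symmetric] Suc_eq_plus1)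
  have b: "(fps_X^k :: int fps)^(Suc (Suc (2*M))) = (fps_X^(2*k))^(Suc M)"
    by (simp only: power_mult[symmetric]) (simp add: algebra_simps)
  have "pf (fps_X^k :: int fps) (2 * Suc M) = pf (fps_X^k) (2*M) * (1 - fps_X^(k*(2*M+1))) * (1 - (fps_X^(2*k))^(Suc M))"
    by (simp only: mult_Suc_right pf_Suc a b add_2_eq_Suc)
  also have "\<dots> = pf (fps_X^(2*k)) (Suc M) * Od k (Suc M)"
    unfolding Suc.IH pf_Suc Od_def by (simp add: ac_simps)
  finally show ?case .
qed

lemma pf_Pp: "pf (fps_X^d :: int fps) M * Pp d M = pf (fps_X^(2*d)) M"
proof (induction M)
  case 0 then show ?case by (simp add: Pp_def)
next
  case (Suc M)
  have e: "((fps_X^d :: int fps)^(Suc M))^2 = (fps_X^(2*d))^(Suc M)"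
    by (simp only: power_mult[symmetric]) (simp add: algebra_simps)
  have f: "(1 - a) * (1 + a) = 1 - a^2" for a :: "int fps" by (simp add: algebra_simps power2_eq_square)
  have pp: "Pp d (Suc M) = Pp d M * (1 + (fps_X^d)^(Suc M))"
    unfolding Pp_def by (simp add: power_mult[symmetric] power_add)
  have "pf (fps_X^d :: int fps) (Suc M) * Pp d (Suc M) = (pf (fps_X^d) M * Pp d M) * ((1 - (fps_X^d)^(Suc M)) * (1 + (fps_X^d)^(Suc M)))"
    unfolding pf_Suc pp by (simp only: mult_ac)
  also have "\<dots> = pf (fps_X^(2*d)) (Suc M)" unfolding Suc.IH f e pf_Suc ..
  finally show ?case .
qed

lemma Od_Op: "Od 2 n * Op n = Od 4 n"
proof -
  have "(1 - fps_X^(2*(2*j+1))) * (1 + fps_X^(2*(2*j+1))) = (1 - fps_X^(4*(2*j+1)) :: int fps)" for j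
  proof -
    have ee: "2*(2*j+1) + 2*(2*j+1) = 4*(2*j+1)" by simp
    have "(fps_X^(2*(2*j+1)) :: int fps) * fps_X^(2*(2*j+1)) = fps_X^(4*(2*j+1))"
      by (metis power_add ee)
    then show ?thesis by (simp add: algebra_simps)
  qed
  then show ?thesis unfolding Od_def Op_def prod.distrib[symmetric] by simp
qed

lemma eqm_cancel2:
  assumes "eqm L (fps_const 2 * f) (fps_const 2 * (g :: int fps))" shows "eqm L f g"
  using assms unfolding eqm_def by simp

lemma T1: "(1 + fps_const 2 * T) * ell 2 = ell 1 ^ 2"
proof (rule eqm_all)
  fix N :: nat
  define M where "M = 2*N+1"
  have a: "eqm (Suc N) (ell 1) (pf (fps_X^1) (2*M))" by (rule ell_trunc) (auto simp: M_def)
  have s: "pf (fps_X^1 :: int fps) (2*M) = pf (fps_X^2) M * Od 1 M" using pf_split[of 1 M] by simp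
  have b: "eqm (Suc N) (ell 2) (pf (fps_X^2) M)" by (rule ell_trunc) (auto simp: M_def)
  have c: "eqm (Suc N) (pf (fps_X^2) M * Od 1 M ^ 2) (1 + fps_const 2 * T)"
    unfolding eqm_def
  proof (intro allI impI)
    fix i assume "i < Suc N"
    then have "2*i+1 \<le> M" "i \<le> M" unfolding M_def by auto
    from caseA[OF this] show "(pf (fps_X^2) M * Od 1 M ^ 2) $ i = (1 + fps_const 2 * T) $ i" .
  qed
  have F1: "eqm (Suc N) (ell 1 ^ 2) ((pf (fps_X^2) M * Od 1 M)^2)" using a unfolding s by (rule eqm_power)
  have F2: "(pf (fps_X^2) M * Od 1 M)^2 = pf (fps_X^2) M * (pf (fps_X^2) M * Od 1 M ^ 2)"
    by (simp add: power2_eq_square ac_simps)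
  have F3: "eqm (Suc N) (pf (fps_X^2) M * (pf (fps_X^2) M * Od 1 M ^ 2)) (ell 2 * (1 + fps_const 2 * T))"
    using b c by (intro eqm_mult) (auto intro: eqm_sym)
  have "eqm (Suc N) (ell 1 ^ 2) (ell 2 * (1 + fps_const 2 * T))"
    using eqm_trans[OF F1[unfolded F2] F3] .
  then show "eqm (Suc N) ((1 + fps_const 2 * T) * ell 2) (ell 1 ^ 2)"
    by (simp add: mult.commute eqm_sym)
qed

lemma T2: "(1 + fps_const 2 * S) * ell 2 ^ 2 * ell 8 ^ 2 = ell 4 ^ 5"
proof (rule eqm_all)
  fix N :: nat
  define M where "M = 2*N+1"
  have s2: "pf (fps_X^2 :: int fps) (2*M) = pf (fps_X^4) M * Od 2 M" using pf_split[of 2 M] by simp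
  have s4: "pf (fps_X^4 :: int fps) (2*M) = pf (fps_X^8) M * Od 4 M" using pf_split[of 4 M] by simp
  have a: "eqm (Suc N) (ell 2) (pf (fps_X^4) M * Od 2 M)" unfolding s2[symmetric] by (rule ell_trunc) (auto simp: M_def)
  have b: "eqm (Suc N) (ell 8) (pf (fps_X^8) M)" by (rule ell_trunc) (auto simp: M_def)
  have c: "eqm (Suc N) (ell 4) (pf (fps_X^4) M)" by (rule ell_trunc) (auto simp: M_def)
  have c2: "eqm (Suc N) (ell 4) (pf (fps_X^8) M * Od 4 M)" unfolding s4[symmetric] by (rule ell_trunc) (auto simp: M_def)
  have d: "eqm (Suc N) (1 + fps_const 2 * S) (pf (fps_X^4) M * Op M ^ 2)"
    unfolding eqm_def
  proof (intro allI impI)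
    fix i assume "i < Suc N"
    then have "2*i+1 \<le> M" "i \<le> M" unfolding M_def by auto
    from caseB[OF this] show "(1 + fps_const 2 * S) $ i = (pf (fps_X^4) M * Op M ^ 2) $ i" by simp
  qed
  have E1: "eqm (Suc N) ((1 + fps_const 2 * S) * ell 2 ^ 2 * ell 8 ^ 2)
      ((pf (fps_X^4) M * Op M ^ 2) * (pf (fps_X^4) M * Od 2 M)^2 * pf (fps_X^8) M ^ 2)"
    using a b d by (intro eqm_mult eqm_power)
  have E2: "(pf (fps_X^4) M * Op M ^ 2) * (pf (fps_X^4) M * Od 2 M)^2 * pf (fps_X^8) M ^ 2
      = pf (fps_X^4) M * (pf (fps_X^4) M * (pf (fps_X^8) M * (Od 2 M * Op M)))^2"
    by (simp add: power2_eq_square ac_simps)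
  have E3: "eqm (Suc N) (pf (fps_X^4) M * (pf (fps_X^4) M * (pf (fps_X^8) M * Od 4 M))^2) (ell 4 * (ell 4 * ell 4)^2)"
    using c c2 by (intro eqm_mult eqm_power) (auto intro: eqm_sym)
  have E4: "ell 4 * (ell 4 * ell 4)^2 = ell 4 ^ 5" by (simp add: power2_eq_square power_def)
  show "eqm (Suc N) ((1 + fps_const 2 * S) * ell 2 ^ 2 * ell 8 ^ 2) (ell 4 ^ 5)"
    using eqm_trans[OF E1[unfolded E2 Od_Op] E3[unfolded E4]] .
qed

lemma T3:
  assumes d: "d \<ge> 1"
  shows "psid d * ell d = ell (2*d) ^ 2"
proof (rule eqm_all)
  fix N :: nat
  define M where "M = 2*N+1"
  have p: "eqm (Suc N) (Pp d (M-1)) (Pp d M)"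
  proof -
    have "Pp d M = Pp d (M-1) * (1 + fps_X^(d*M))" unfolding Pp_def M_def by simp
    moreover have "eqm (Suc N) (Pp d (M-1) * (1 + fps_X^(d*M))) (Pp d (M-1) * 1)"
    proof (intro eqm_mult eqm_refl eqm_one_plus_X)
      have "M \<le> d * M" using d by simp
      then show "Suc N \<le> d * M" unfolding M_def by linarith
    qed
    ultimately show ?thesis by (simp add: eqm_sym)
  qed
  have c: "eqm (Suc N) (pf (fps_X^d) M * (fps_const 2 * Pp d (M-1) * Pp d M)) (fps_const 2 * psid d)"
    unfolding eqm_def
  proof (intro allI impI)
    fix i assume "i < Suc N"
    then have "2*i+1 \<le> M" "i \<le> M" unfolding M_def by auto
    from caseC[OF d this] show "(pf (fps_X^d) M * (fps_const 2 * Pp d (M-1) * Pp d M)) $ i = (fps_const 2 * psid d) $ i" by simp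
  qed
  have "eqm (Suc N) (pf (fps_X^d) M * (fps_const 2 * Pp d (M-1) * Pp d M)) (pf (fps_X^d) M * (fps_const 2 * Pp d M * Pp d M))"
    using p by (intro eqm_mult eqm_refl)
  then have "eqm (Suc N) (pf (fps_X^d) M * (fps_const 2 * Pp d M * Pp d M)) (fps_const 2 * psid d)"
    using c eqm_sym eqm_trans by blast
  moreover have "pf (fps_X^d) M * (fps_const 2 * Pp d M * Pp d M) = fps_const 2 * (pf (fps_X^d) M * Pp d M ^ 2)"
    by (simp add: power2_eq_square ac_simps)
  ultimately have "eqm (Suc N) (fps_const 2 * (pf (fps_X^d) M * Pp d M ^ 2)) (fps_const 2 * psid d)"
    by simp
  then have e: "eqm (Suc N) (pf (fps_X^d) M * Pp d M ^ 2) (psid d)" by (rule eqm_cancel2)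
  have f: "eqm (Suc N) (ell d) (pf (fps_X^d) M)" using d by (intro ell_trunc) (auto simp: M_def)
  have g: "eqm (Suc N) (ell (2*d)) (pf (fps_X^(2*d)) M)" using d by (intro ell_trunc) (auto simp: M_def)
  have G1: "eqm (Suc N) (psid d * ell d) ((pf (fps_X^d) M * Pp d M ^ 2) * pf (fps_X^d) M)"
    using e f by (intro eqm_mult) (auto intro: eqm_sym)
  have G2: "(pf (fps_X^d) M * Pp d M ^ 2) * pf (fps_X^d) M = (pf (fps_X^d) M * Pp d M)^2"
    by (simp add: power2_eq_square ac_simps)
  have G3: "eqm (Suc N) ((pf (fps_X^d) M * Pp d M)^2) (ell (2*d) ^ 2)"
    unfolding pf_Pp using g by (intro eqm_power) (rule eqm_sym)
  show "eqm (Suc N) (psid d * ell d) (ell (2*d) ^ 2)" using eqm_trans[OF G1[unfolded G2] G3] .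
qed

lemma ell_0: "ell k $ 0 = 1" by (simp add: ell_nth pf_def)

lemma pow_nth0: "(f::int fps) $ 0 = 1 \<Longrightarrow> (f ^ n) $ 0 = 1"
  by (induction n) auto

lemma D0: "(ell 1 ^ 2 * ell 2 * ell 8 ^ 2) $ 0 = 1"
  apply (simp only: fps_mult_nth_0)
  apply (subst fps_power_zeroth)+
  apply (simp add: ell_0)
  done

lemma W0: "(ell 2 ^ 2 * ell 8 ^ 2) $ 0 = 1"
  apply (simp only: fps_mult_nth_0)
  apply (subst fps_power_zeroth)+
  apply (simp add: ell_0)
  done

lemma G2_rel: "G2 * (1 + fps_const 2 * T) = 1 + fps_const 2 * S"
proof -
  let ?D = "ell 1 ^ 2 * ell 2 * ell 8 ^ 2"
  let ?W = "ell 2 ^ 2 * ell 8 ^ 2"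
  have D0: "?D $ 0 = 1" by (rule D0)
  have inv: "?D * fps_right_inverse ?D 1 = 1" by (rule fps_right_inverse) (simp only: D0 mult_1_right)
  have "G2 * ?D = ell 4 ^ 5 * (?D * fps_right_inverse ?D 1)" unfolding G2_def by (simp only: mult_ac)
  then have GD: "G2 * ?D = ell 4 ^ 5" unfolding inv by simp
  have D: "?D = (1 + fps_const 2 * T) * ?W"
    unfolding T1[symmetric] by (simp only: power2_eq_square mult_ac)
  have "(G2 * (1 + fps_const 2 * T)) * ?W = G2 * ?D" unfolding D by (simp only: mult_ac)
  also have "\<dots> = (1 + fps_const 2 * S) * ?W" unfolding GD T2[symmetric] by (simp only: mult_ac)
  finally have "(G2 * (1 + fps_const 2 * T)) * ?W = (1 + fps_const 2 * S) * ?W" .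
  moreover have "?W \<noteq> 0"
  proof
    assume h: "?W = 0"
    have "?W $ 0 = 1" by (rule W0)
    then show False unfolding h by simp
  qed
  ultimately show ?thesis by simp
qed

lemma g2_formula:
  "g2 N = (1::int fps) $ N + 2 * S $ N - 2 * T $ N - 4 * (S*T) $ N + 4 * (T*T) $ N + 8 * ((S*T*T) $ N - (T*T*T*G2) $ N)"
proof -
  let ?c = "fps_const (2::int)"
  have "G2 * (1 + ?c^3 * (T*T*T)) = (G2 * (1 + ?c*T)) * (1 - ?c*T + ?c^2*(T*T))"
    by (simp add: algebra_simps power2_eq_square power3_eq_cube)
  then have "G2 * (1 + ?c^3 * (T*T*T)) = (1 + ?c*S) * (1 - ?c*T + ?c^2*(T*T))"
    by (simp only: G2_rel)
  then have "G2 = (1 + ?c*S) * (1 - ?c*T + ?c^2*(T*T)) - ?c^3 * (T*T*T*G2)"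
    by (simp add: algebra_simps)
  also have "\<dots> = 1 + ?c*S - ?c*T - ?c^2*(S*T) + ?c^2*(T*T) + ?c^3*(S*T*T - T*T*T*G2)"
    by (simp add: algebra_simps)
  finally have "G2 = 1 + ?c*S - ?c*T - fps_const 4*(S*T) + fps_const 4*(T*T) + fps_const 8*(S*T*T - T*T*T*G2)"
    by simp
  then show ?thesis unfolding g2_def by (metis fps_add_nth fps_sub_nth fps_mult_left_const_nth)
qed

definition fcong :: "int \<Rightarrow> int fps \<Rightarrow> int fps \<Rightarrow> bool" where
  "fcong m f g \<longleftrightarrow> (\<forall>n. [f $ n = g $ n] (mod m))"

lemma fcong_refl [simp]: "fcong m f f" by (simp add: fcong_def)
lemma fcong_sym: "fcong m f g \<Longrightarrow> fcong m g f" by (simp add: fcong_def cong_sym)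
lemma fcong_trans: "fcong m f g \<Longrightarrow> fcong m g h \<Longrightarrow> fcong m f h"
  unfolding fcong_def by (metis cong_trans)
lemma fcong_mult: "fcong m f f' \<Longrightarrow> fcong m g g' \<Longrightarrow> fcong m (f*g) (f'*g')"
  unfolding fcong_def fps_mult_nth by (auto intro!: cong_sum cong_mult)
lemma fcong_power: "fcong m f g \<Longrightarrow> fcong m (f^n) (g^n)"
  by (induction n) (auto intro: fcong_mult)
lemma fcong_cancel:
  assumes "fcong m (f*P) (g*P)" "P $ 0 = 1" shows "fcong m f g"
proof -
  define P' where "P' = fps_right_inverse P 1"
  have PP: "P * P' = 1" unfolding P'_def by (rule fps_right_inverse) (simp add: assms)
  have "fcong m (f*P*P') (g*P*P')" using assms(1) by (rule fcong_mult) simp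
  then show ?thesis by (simp add: mult.assoc PP)
qed
lemma fcong_two: "fcong 2 (f + fps_const 2 * g) f"
  unfolding fcong_def cong_def by simp

lemma pf_frob: "fcong 2 (pf (fps_X^k) M ^ 2) (pf (fps_X^(2*k)) M)"
proof (induction M)
  case 0 then show ?case by simp
next
  case (Suc M)
  let ?a = "(fps_X^k :: int fps)^(Suc M)"
  have e: "?a^2 = (fps_X^(2*k))^(Suc M)"
    by (simp only: power_mult[symmetric]) (simp add: algebra_simps)
  have c2: "fps_const (2::int) = 2" by (simp add: numeral_fps_const)
  have "(1 - ?a)^2 = (1 - ?a^2) + fps_const 2 * (?a^2 - ?a)"
    unfolding c2 by (simp add: algebra_simps power2_eq_square)
  then have "fcong 2 ((1 - ?a)^2) (1 - ?a^2)"
    using fcong_two[of "1 - ?a^2" "?a^2 - ?a"] by simp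
  then have "fcong 2 ((1 - ?a)^2) (1 - (fps_X^(2*k))^(Suc M))" unfolding e .
  then have "fcong 2 (pf (fps_X^k) M ^ 2 * (1 - ?a)^2) (pf (fps_X^(2*k)) M * (1 - (fps_X^(2*k))^(Suc M)))"
    using Suc.IH by (rule fcong_mult[rotated])
  then show ?case unfolding pf_Suc power_mult_distrib .
qed

lemma ell_frob:
  assumes k: "k \<ge> 1" shows "fcong 2 (ell k ^ 2) (ell (2*k))"
  unfolding fcong_def
proof
  fix n
  have "eqm (Suc n) (ell k ^ 2) (pf (fps_X^k) n ^ 2)" using k by (intro eqm_power ell_trunc) auto
  then have a: "(ell k ^ 2) $ n = (pf (fps_X^k) n ^ 2) $ n" unfolding eqm_def by simp
  have b: "ell (2*k) $ n = pf (fps_X^(2*k)) n $ n" by (rule ell_nth)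
  show "[(ell k ^ 2) $ n = ell (2*k) $ n] (mod 2)" unfolding a b using pf_frob unfolding fcong_def by blast
qed

lemma psi_ell: "fcong 2 (psid 1 * psid 2) (ell 1 * ell 8)"
proof (rule fcong_cancel)
  have A: "(psid 1 * psid 2) * (ell 1 * ell 2) = ell 2 ^ 2 * ell 4 ^ 2"
  proof -
    have t1: "psid 1 * ell 1 = ell 2 ^ 2" by (rule T3[of 1, unfolded mult_1_right]) simp
    have e4: "(2::nat)*2 = 4" by simp
    have t2: "psid 2 * ell 2 = ell 4 ^ 2" by (rule T3[of 2, unfolded e4]) simp
    have "(psid 1 * psid 2) * (ell 1 * ell 2) = (psid 1 * ell 1) * (psid 2 * ell 2)" by (simp only: ac_simps)
    then show ?thesis unfolding t1 t2 .
  qed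
  have B: "(ell 1 * ell 8) * (ell 1 * ell 2) = ell 1 ^ 2 * (ell 2 * ell 8)"
    by (simp add: power2_eq_square ac_simps)
  have f1: "fcong 2 (ell 1 ^ 2) (ell 2)" by (rule ell_frob[of 1, unfolded mult_1_right]) simp
  have e8: "(2::nat)*4 = 8" by simp
  have f4: "fcong 2 (ell 4 ^ 2) (ell 8)" by (rule ell_frob[of 4, unfolded e8]) simp
  have F1: "fcong 2 (ell 2 ^ 2 * ell 4 ^ 2) (ell 2 ^ 2 * ell 8)" using f4 by (intro fcong_mult) auto
  have F2: "fcong 2 (ell 1 ^ 2 * (ell 2 * ell 8)) (ell 2 * (ell 2 * ell 8))" using f1 by (intro fcong_mult) auto
  have E: "ell 2 * (ell 2 * ell 8) = ell 2 ^ 2 * ell 8" by (simp add: power2_eq_square ac_simps)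
  show "fcong 2 ((psid 1 * psid 2) * (ell 1 * ell 2)) ((ell 1 * ell 8) * (ell 1 * ell 2))"
    unfolding A B using fcong_trans[OF F1 fcong_sym[OF F2[unfolded E]]] .
  show "(ell 1 * ell 2) $ 0 = 1" by (simp add: ell_0)
qed

definition Sol :: "nat \<Rightarrow> (nat \<times> nat) set" where
  "Sol N = {(b,a). 1 \<le> b \<and> 1 \<le> a \<and> b^2 + 2*a^2 = N}"

lemma finite_Sol: "finite (Sol N)"
proof -
  have "Sol N \<subseteq> {0..N} \<times> {0..N}"
  proof
    fix x assume "x \<in> Sol N"
    then obtain b a where x: "x = (b,a)" and e: "b^2 + 2*a^2 = N" unfolding Sol_def by auto
    have "b \<le> N" using le_sq_nat[of b] e by linarith
    moreover have "a \<le> N" using le_sq_nat[of a] e by linarith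
    ultimately show "x \<in> {0..N} \<times> {0..N}" using x by auto
  qed
  then show ?thesis by (rule finite_subset) auto
qed

lemma sq_odd_tri: "(2*j+1)^2 = 8*(j*(j+1) div 2) + (1::nat)"
proof -
  have "even (j*(j+1))" by simp
  then have "j*(j+1) = 2*(j*(j+1) div 2)" by simp
  moreover have "(2*j+1)^2 = 4*(j*(j+1)) + 1" by (simp add: power2_eq_square algebra_simps)
  ultimately show ?thesis by linarith
qed

lemma sq_mod4: "(b::nat)^2 mod 4 = 0 \<or> b^2 mod 4 = 1"
proof (cases "even b")
  case True
  then obtain c where "b = 2*c" by auto
  then show ?thesis by (simp add: power2_eq_square)
next
  case False
  then obtain j where "b = 2*j+1" using oddE by blast
  then obtain t where t: "b^2 = 8*t+1" using sq_odd_tri[of j] by blast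
  have "(8*t+1) mod 4 = (1::nat)" by presburger
  then show ?thesis using t by simp
qed

lemma sum_indicator_nat:
  fixes g :: "nat \<Rightarrow> nat"
  assumes "finite A" "inj_on g A"
  shows "(\<Sum>b\<in>A. if g b = N then 1 else 0) = (if \<exists>b\<in>A. g b = N then 1 else (0::int))"
  by (rule sum_indicator_unique) (use assms in \<open>auto dest: inj_onD\<close>)

lemma S_nth: "S $ N = (if \<exists>a\<in>{1..N}. 2*a^2 = N then 1 else 0)"
  unfolding S_def fps_nth_Abs_fps
  by (rule sum_indicator_nat) (auto intro: inj_onI)

lemma T_zero: "\<not>(\<exists>b. b^2 = N) \<Longrightarrow> T $ N = 0"
  unfolding T_def by auto

lemma T_mod2: "[T $ N = (if \<exists>b\<in>{1..N}. b^2 = N then 1 else 0)] (mod 2)"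
proof -
  have "[T $ N = (\<Sum>b\<in>{1..N}. if b^2 = N then 1 else 0)] (mod 2)"
    unfolding T_def fps_nth_Abs_fps
  proof (rule cong_sum)
    fix b :: nat
    have "[(-1::int)^b = 1] (mod 2)"
      by (cases "even b") (auto simp: cong_def)
    then show "[(if b^2 = N then (-1::int)^b else 0) = (if b^2 = N then 1 else 0)] (mod 2)"
      by auto
  qed
  also have "(\<Sum>b\<in>{1..N}. if b^2 = N then 1 else 0) = (if \<exists>b\<in>{1..N}. b^2 = N then 1 else (0::int))"
    by (rule sum_indicator_nat) (auto intro: inj_onI)
  finally show ?thesis .
qed

lemma sum_ind_card:
  "(\<Sum>i\<in>A. if P i then 1 else 0) = int (card {i\<in>A. P i})" if "finite A"
proof -
  have "(\<Sum>i\<in>A. if P i then 1 else (0::int)) = (\<Sum>i\<in>{i\<in>A. P i}. 1)"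
    using that by (rule sum.inter_filter[symmetric])
  then show ?thesis by simp
qed

lemma card_ST: "card {i\<in>{0..N}. (\<exists>a\<in>{1..i}. 2*a^2 = i) \<and> (\<exists>b\<in>{1..N-i}. b^2 = N-i)} = card (Sol N)"
proof -
  let ?f = "\<lambda>(b::nat,a::nat). 2*a^2"
  have inj: "inj_on ?f (Sol N)"
  proof (rule inj_onI)
    fix x y assume x: "x \<in> Sol N" and y: "y \<in> Sol N" and e: "?f x = ?f y"
    obtain b a where xx: "x = (b,a)" "b^2 + 2*a^2 = N" using x unfolding Sol_def by auto
    obtain b' a' where yy: "y = (b',a')" "b'^2 + 2*a'^2 = N" using y unfolding Sol_def by auto
    from e xx yy have "a^2 = a'^2" by simp
    then have "a = a'" by simp
    moreover from xx yy \<open>a^2 = a'^2\<close> have "b^2 = b'^2" by linarith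
    then have "b = b'" by simp
    ultimately show "x = y" using xx yy by simp
  qed
  have img: "?f ` Sol N = {i\<in>{0..N}. (\<exists>a\<in>{1..i}. 2*a^2 = i) \<and> (\<exists>b\<in>{1..N-i}. b^2 = N-i)}"
  proof
    show "?f ` Sol N \<subseteq> {i\<in>{0..N}. (\<exists>a\<in>{1..i}. 2*a^2 = i) \<and> (\<exists>b\<in>{1..N-i}. b^2 = N-i)}"
    proof
      fix i assume "i \<in> ?f ` Sol N"
      then obtain b a where i: "i = 2*a^2" and s: "1 \<le> b" "1 \<le> a" "b^2 + 2*a^2 = N"
        unfolding Sol_def by auto
      have "a \<le> 2*a^2" using le_sq_nat[of a] by linarith
      moreover have "b \<le> N - i" using le_sq_nat[of b] s i by linarith
      ultimately show "i \<in> {i\<in>{0..N}. (\<exists>a\<in>{1..i}. 2*a^2 = i) \<and> (\<exists>b\<in>{1..N-i}. b^2 = N-i)}"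
        using i s by force
    qed
    show "{i\<in>{0..N}. (\<exists>a\<in>{1..i}. 2*a^2 = i) \<and> (\<exists>b\<in>{1..N-i}. b^2 = N-i)} \<subseteq> ?f ` Sol N"
    proof
      fix i assume "i \<in> {i\<in>{0..N}. (\<exists>a\<in>{1..i}. 2*a^2 = i) \<and> (\<exists>b\<in>{1..N-i}. b^2 = N-i)}"
      then obtain a b where "i \<le> N" "1 \<le> a" "2*a^2 = i" "1 \<le> b" "b^2 = N - i" by auto
      then have "(b,a) \<in> Sol N" "i = ?f (b,a)" unfolding Sol_def by auto
      then show "i \<in> ?f ` Sol N" by blast
    qed
  qed
  show ?thesis using card_image[OF inj] img by simp
qed

lemma ST_mod2: "[(S*T) $ N = int (card (Sol N))] (mod 2)"
proof -
  have "[(S*T) $ N = (\<Sum>i=0..N. (if \<exists>a\<in>{1..i}. 2*a^2 = i then 1 else 0) * (if \<exists>b\<in>{1..N-i}. b^2 = N-i then 1 else 0))] (mod 2)"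
    unfolding fps_mult_nth S_nth by (intro cong_sum cong_mult cong_refl T_mod2)
  also have "(\<Sum>i=0..N. (if \<exists>a\<in>{1..i}. 2*a^2 = i then 1 else 0) * (if \<exists>b\<in>{1..N-i}. b^2 = N-i then 1 else (0::int)))
      = (\<Sum>i=0..N. if (\<exists>a\<in>{1..i}. 2*a^2 = i) \<and> (\<exists>b\<in>{1..N-i}. b^2 = N-i) then 1 else 0)"
    by (rule sum.cong) auto
  also have "\<dots> = int (card (Sol N))" by (simp only: sum_ind_card finite_atLeastAtMost card_ST)
  finally show ?thesis .
qed

lemma psi_card: "(psid 1 * psid 2) $ m = int (card (Sol (8*m+3)))"
proof -
  let ?P = "\<lambda>i. (\<exists>a. i = 1*(a*(a+1) div 2)) \<and> (\<exists>b. m - i = 2*(b*(b+1) div 2))"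
  have "(psid 1 * psid 2) $ m = (\<Sum>i=0..m. if ?P i then 1 else 0)"
    unfolding fps_mult_nth psid_def fps_nth_Abs_fps by (rule sum.cong) auto
  also have "\<dots> = int (card {i\<in>{0..m}. ?P i})" by (simp only: sum_ind_card finite_atLeastAtMost)
  also have "card {i\<in>{0..m}. ?P i} = card (Sol (8*m+3))"
  proof -
    let ?f = "\<lambda>(b::nat,a::nat). (b^2 - 1) div 8"
    have par: "\<exists>j k. b = 2*j+1 \<and> a = 2*k+1 \<and> (j*(j+1) div 2) + 2*(k*(k+1) div 2) = m"
      if s: "b^2 + 2*a^2 = 8*m+3" for b a
    proof -
      have "odd b"
      proof
        assume "even b"
        then have "even (b^2 + 2*a^2)" by simp
        then show False using s by simp
      qed
      then obtain j where j: "b = 2*j+1" using oddE by blast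
      have "odd a"
      proof
        assume "even a"
        then obtain c where "a = 2*c" by auto
        then have "2*a^2 = 8*c^2" by (simp add: power2_eq_square)
        moreover have "b^2 = 8*(j*(j+1) div 2) + 1" using j sq_odd_tri[of j] by simp
        ultimately have "8*(j*(j+1) div 2) + 1 + 8*c^2 = 8*m+3" using s by simp
        moreover have "\<And>x y::nat. 8*x + 1 + 8*y \<noteq> 8*m+3" by presburger
        ultimately show False by blast
      qed
      then obtain k where k: "a = 2*k+1" using oddE by blast
      have "8*(j*(j+1) div 2) + 1 + 2*(8*(k*(k+1) div 2) + 1) = 8*m+3"
        using s j k sq_odd_tri[of j] sq_odd_tri[of k] by simp
      moreover have "\<And>x y::nat. 8*x + 1 + 2*(8*y+1) = 8*m+3 \<Longrightarrow> x + 2*y = m" by presburger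
      ultimately have "(j*(j+1) div 2) + 2*(k*(k+1) div 2) = m" by blast
      then show ?thesis using j k by blast
    qed
    have inj: "inj_on ?f (Sol (8*m+3))"
    proof (rule inj_onI)
      fix x y assume x: "x \<in> Sol (8*m+3)" and y: "y \<in> Sol (8*m+3)" and e: "?f x = ?f y"
      obtain b a where xx: "x = (b,a)" "b^2 + 2*a^2 = 8*m+3" using x unfolding Sol_def by auto
      obtain b' a' where yy: "y = (b',a')" "b'^2 + 2*a'^2 = 8*m+3" using y unfolding Sol_def by auto
      obtain j k where jk: "b = 2*j+1" "a = 2*k+1" using par[OF xx(2)] by blast
      obtain j' k' where jk': "b' = 2*j'+1" "a' = 2*k'+1" using par[OF yy(2)] by blast
      have "(b^2 - 1) div 8 = j*(j+1) div 2" using jk sq_odd_tri[of j] by simp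
      moreover have "(b'^2 - 1) div 8 = j'*(j'+1) div 2" using jk' sq_odd_tri[of j'] by simp
      ultimately have "j*(j+1) div 2 = j'*(j'+1) div 2" using e xx yy by simp
      then have "j = j'" by (rule tri_inj)
      then have "b = b'" using jk jk' by simp
      then have "b^2 + 2*a^2 = b^2 + 2*a'^2" using xx yy by simp
      then have "a^2 = a'^2" by simp
      then have "a = a'" by simp
      then show "x = y" using xx yy \<open>b = b'\<close> by simp
    qed
    have img: "?f ` Sol (8*m+3) = {i\<in>{0..m}. ?P i}"
    proof
      show "?f ` Sol (8*m+3) \<subseteq> {i\<in>{0..m}. ?P i}"
      proof
        fix i assume "i \<in> ?f ` Sol (8*m+3)"
        then obtain b a where i: "i = (b^2 - 1) div 8" and s: "b^2 + 2*a^2 = 8*m+3"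
          unfolding Sol_def by auto
        obtain j k where jk: "b = 2*j+1" "a = 2*k+1" "(j*(j+1) div 2) + 2*(k*(k+1) div 2) = m"
          using par[OF s] by blast
        have "i = j*(j+1) div 2" using i jk sq_odd_tri[of j] by simp
        then show "i \<in> {i\<in>{0..m}. ?P i}" using jk by auto
      qed
      show "{i\<in>{0..m}. ?P i} \<subseteq> ?f ` Sol (8*m+3)"
      proof
        fix i assume "i \<in> {i\<in>{0..m}. ?P i}"
        then obtain j k where i: "i \<le> m" "i = j*(j+1) div 2" "m - i = 2*(k*(k+1) div 2)" by auto
        obtain X Y where X: "X = j*(j+1) div 2" and Y: "Y = k*(k+1) div 2" by blast
        have "(2*j+1)^2 + 2*(2*k+1)^2 = 8*X+1 + 2*(8*Y+1)"
          using sq_odd_tri[of j] sq_odd_tri[of k] X Y by simp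
        also have "\<dots> = 8*m+3" using i unfolding X[symmetric] Y[symmetric] by presburger
        finally have "(2*j+1)^2 + 2*(2*k+1)^2 = 8*m+3" .
        then have "(2*j+1, 2*k+1) \<in> Sol (8*m+3)" unfolding Sol_def by simp
        moreover have "i = ?f (2*j+1, 2*k+1)" using i sq_odd_tri[of j] by simp
        ultimately show "i \<in> ?f ` Sol (8*m+3)" by blast
      qed
    qed
    show ?thesis using card_image[OF inj] img by simp
  qed
  finally show ?thesis .
qed

lemma ell18_card: "[(ell 1 * ell 8) $ m = int (card (Sol (8*m+3)))] (mod 2)"
  using psi_ell psi_card unfolding fcong_def by (metis cong_sym)

lemma g2_16: "[g2 (16*m+2) = 2 * (if \<exists>x. x^2 = 8*m+1 then 1 else 0)] (mod 4)"
proof -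
  let ?N = "16*m+2"
  have T0: "T $ ?N = 0"
  proof (rule T_zero)
    show "\<not>(\<exists>b. b^2 = ?N)"
    proof
      assume "\<exists>b. b^2 = ?N"
      then obtain b where "b^2 = ?N" by blast
      then have "?N mod 4 = 0 \<or> ?N mod 4 = 1" using sq_mod4[of b] by simp
      then show False by presburger
    qed
  qed
  have S1: "S $ ?N = (if \<exists>x. x^2 = 8*m+1 then 1 else 0)"
  proof -
    have "(\<exists>a\<in>{1..?N}. 2*a^2 = ?N) \<longleftrightarrow> (\<exists>x. x^2 = 8*m+1)"
    proof
      assume "\<exists>x. x^2 = 8*m+1"
      then obtain x where x: "x^2 = 8*m+1" by blast
      then have "x \<noteq> 0" by (cases x) auto
      moreover have "x \<le> ?N" using le_sq_nat[of x] x by linarith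
      ultimately show "\<exists>a\<in>{1..?N}. 2*a^2 = ?N" using x by (intro bexI[of _ x]) auto
    next
      assume "\<exists>a\<in>{1..?N}. 2*a^2 = ?N"
      then obtain a where "2*a^2 = ?N" by blast
      then have "a^2 = 8*m+1" by linarith
      then show "\<exists>x. x^2 = 8*m+1" by blast
    qed
    then show ?thesis unfolding S_nth by simp
  qed
  have "g2 ?N = 2 * S $ ?N + 4 * (- (S*T) $ ?N + (T*T) $ ?N + 2 * ((S*T*T) $ ?N - (T*T*T*G2) $ ?N))"
    unfolding g2_formula T0 by simp
  then show ?thesis unfolding S1 cong_iff_dvd_diff by simp
qed

lemma g2_8: "[g2 (8*m+3) = 4 * int (card (Sol (8*m+3)))] (mod 8)"
proof -
  let ?N = "8*m+3"
  have nsq: "\<not>(\<exists>b. b^2 = ?N)"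
  proof
    assume "\<exists>b. b^2 = ?N"
    then obtain b where "b^2 = ?N" by blast
    then have "?N mod 4 = 0 \<or> ?N mod 4 = 1" using sq_mod4[of b] by simp
    then show False by presburger
  qed
  have T0: "T $ ?N = 0" using nsq by (rule T_zero)
  have "2*a^2 \<noteq> ?N" for a :: nat
  proof
    assume "2*a^2 = ?N"
    moreover have "even (2*a^2)" by simp
    ultimately show False by simp
  qed
  then have S0: "S $ ?N = 0" unfolding S_nth by auto
  have TT0: "(T*T) $ ?N = 0"
    unfolding fps_mult_nth
  proof (rule sum.neutral, rule ballI)
    fix i assume i: "i \<in> {0..?N}"
    show "T $ i * T $ (?N - i) = 0"
    proof (cases "(\<exists>a. a^2 = i) \<and> (\<exists>b. b^2 = ?N - i)")
      case True
      then obtain a b where ab: "a^2 = i" "b^2 = ?N - i" by blast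
      then have abN: "a^2 + b^2 = ?N" using i by simp
      have H: "\<And>x y::nat. x mod 4 = 0 \<or> x mod 4 = 1 \<Longrightarrow> y mod 4 = 0 \<or> y mod 4 = 1 \<Longrightarrow> x + y \<noteq> ?N"
        by presburger
      have False using H[OF sq_mod4[of a] sq_mod4[of b]] abN by simp
      then show ?thesis ..
    next
      case False
      then show ?thesis using T_zero by auto
    qed
  qed
  have "g2 ?N = - 4 * (S*T) $ ?N + 8 * ((S*T*T) $ ?N - (T*T*T*G2) $ ?N)"
    unfolding g2_formula T0 S0 TT0 by simp
  then have "[g2 ?N = - 4 * (S*T) $ ?N] (mod 8)" unfolding cong_iff_dvd_diff by simp
  moreover have "[- 4 * (S*T) $ ?N = 4 * int (card (Sol ?N))] (mod 8)"
  proof -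
    have "2 dvd ((S*T) $ ?N - int (card (Sol ?N)))" using ST_mod2 unfolding cong_iff_dvd_diff .
    then obtain c where c: "(S*T) $ ?N - int (card (Sol ?N)) = 2*c" by blast
    have e: "- 4 * (S*T) $ ?N - 4 * int (card (Sol ?N)) = 8 * (- c - int (card (Sol ?N)))"
      using c by (simp add: algebra_simps)
    show ?thesis unfolding cong_iff_dvd_diff e by simp
  qed
  ultimately show ?thesis by (rule cong_trans)
qed

lemma inert:
  fixes p a b :: nat
  assumes p: "prime p" and leg: "Legendre (-8) (int p) = -1" and d: "p dvd b^2 + 2*a^2"
  shows "p dvd a \<and> p dvd b"
proof -
  have nq: "\<not> QuadRes (int p) (-8)" using leg unfolding Legendre_def by (auto split: if_splits)
  have pa: "p dvd a"
  proof (rule ccontr)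
    assume na: "\<not> p dvd a"
    then have "coprime p a" using p by (intro prime_imp_coprime)
    then have g: "gcd (int a) (int p) = 1" by (simp add: coprime_commute coprime_iff_gcd_eq_1[symmetric])
    obtain x where x: "[int a * x = gcd (int a) (int p)] (mod int p)" using cong_solve_int by blast
    then have hC: "int p dvd (int a * x - 1)" using g by (simp add: cong_iff_dvd_diff)
    have hB: "int p dvd (int b^2 + 2 * int a^2)"
    proof -
      have "int p dvd int (b^2 + 2*a^2)" using d by (simp only: int_dvd_int_iff)
      moreover have "int (b^2 + 2*a^2) = int b^2 + 2 * int a^2" by simp
      ultimately show ?thesis by simp
    qed
    have "int p dvd (4 * x^2 * (int b^2 + 2 * int a^2) - 8 * (int a * x - 1) * (int a * x + 1))"
      by (rule dvd_diff[OF dvd_mult[OF hB] dvd_mult2[OF dvd_mult[OF hC]]])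
    moreover have "4 * x^2 * (int b^2 + 2 * int a^2) - 8 * (int a * x - 1) * (int a * x + 1) = (2 * int b * x)^2 + 8"
      by (simp add: algebra_simps power2_eq_square)
    ultimately have "int p dvd (2 * int b * x)^2 + 8" by simp
    then have "[(2 * int b * x)^2 = -8] (mod int p)" by (simp add: cong_iff_dvd_diff)
    then have "QuadRes (int p) (-8)" unfolding QuadRes_def by blast
    then show False using nq by simp
  qed
  then have "p dvd a*a" by (rule dvd_mult2)
  then have "p dvd 2*(a*a)" by (rule dvd_mult)
  then have h2: "p dvd 2*a^2" by (simp add: power2_eq_square)
  have "p dvd b^2" using d dvd_add_left_iff[OF h2] by blast
  then have "p dvd b" by (rule prime_dvd_power[OF p])
  then show ?thesis using pa by simp
qed

lemma Sol_scale:
  fixes p :: nat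
  assumes p: "prime p" and leg: "Legendre (-8) (int p) = -1"
  shows "card (Sol (p^2 * N)) = card (Sol N)"
proof -
  let ?f = "\<lambda>(b::nat,a::nat). (p*b, p*a)"
  have p0: "p > 0" using p prime_gt_0_nat by blast
  have inj: "inj_on ?f (Sol N)" by (rule inj_onI) (use p0 in auto)
  have "?f ` Sol N = Sol (p^2 * N)"
  proof
    show "?f ` Sol N \<subseteq> Sol (p^2 * N)"
    proof
      fix y assume "y \<in> ?f ` Sol N"
      then obtain b a where y: "y = (p*b, p*a)" and s: "1 \<le> b" "1 \<le> a" "b^2 + 2*a^2 = N"
        unfolding Sol_def by auto
      have "(p*b)^2 + 2*(p*a)^2 = p^2 * (b^2 + 2*a^2)" by (simp add: algebra_simps power_mult_distrib)
      then show "y \<in> Sol (p^2 * N)" using y s p0 unfolding Sol_def by simp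
    qed
    show "Sol (p^2 * N) \<subseteq> ?f ` Sol N"
    proof
      fix y assume "y \<in> Sol (p^2 * N)"
      then obtain b a where y: "y = (b,a)" and s: "1 \<le> b" "1 \<le> a" "b^2 + 2*a^2 = p^2 * N"
        unfolding Sol_def by auto
      have "p dvd b^2 + 2*a^2" using s by simp
      then have "p dvd a \<and> p dvd b" using p leg by (intro inert)
      then obtain a' b' where ab: "a = p*a'" "b = p*b'" by (auto elim!: dvdE)
      have "p^2 * (b'^2 + 2*a'^2) = p^2 * N" using s ab by (simp add: algebra_simps power_mult_distrib)
      then have "b'^2 + 2*a'^2 = N" using p0 by simp
      moreover have "1 \<le> a'" "1 \<le> b'" using s ab by (auto simp: Suc_le_eq)
      ultimately have "(b',a') \<in> Sol N" unfolding Sol_def by simp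
      then show "y \<in> ?f ` Sol N" using y ab by force
    qed
  qed
  then show ?thesis using card_image[OF inj] by simp
qed

lemma Sol_scale_pow:
  fixes p :: nat
  assumes p: "prime p" and leg: "Legendre (-8) (int p) = -1"
  shows "card (Sol (p^(2*k) * N)) = card (Sol N)"
proof (induction k)
  case (Suc k)
  have e: "2 * Suc k = 2 + 2*k" by simp
  have e2: "p^(2 * Suc k) * N = p^2 * (p^(2*k) * N)" by (simp only: e power_add mult.assoc)
  show ?case unfolding e2 Sol_scale[OF p leg] by (rule Suc.IH)
qed simp

lemma Sol_empty:
  fixes p :: nat
  assumes p: "prime p" and leg: "Legendre (-8) (int p) = -1" and u: "\<not> p dvd u"
  shows "card (Sol (p^(2*k+1) * u)) = 0"
proof -
  have "Sol (p * u) = {}"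
  proof (rule ccontr)
    assume "Sol (p * u) \<noteq> {}"
    then obtain b a where s: "b^2 + 2*a^2 = p * u" unfolding Sol_def by auto
    then have "p dvd b^2 + 2*a^2" by simp
    then have "p dvd a \<and> p dvd b" using p leg by (intro inert)
    then obtain a' b' where ab: "a = p*a'" "b = p*b'" by (auto elim!: dvdE)
    have "p * (p * (b'^2 + 2*a'^2)) = p * u" using s ab by (simp add: algebra_simps power2_eq_square)
    then have "p * (b'^2 + 2*a'^2) = u" using p prime_gt_0_nat by simp
    then have "p dvd u" by (metis dvd_triv_left)
    then show False using u by simp
  qed
  moreover have e: "p^(2*k+1) * u = p^(2*k) * (p * u)" by (simp only: power_add power_one_right mult.assoc)
  ultimately show ?thesis unfolding e Sol_scale_pow[OF p leg, of k "p*u"] by simp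
qed

lemma sq_scale:
  fixes p :: nat
  assumes p: "prime p"
  shows "(\<exists>x. x^2 = p^(2*k) * N) \<longleftrightarrow> (\<exists>x. x^2 = N)"
proof
  assume "\<exists>x. x^2 = N"
  then obtain x where "x^2 = N" by blast
  then have "(p^k * x)^2 = p^(2*k) * N" by (simp add: power_mult_distrib power_mult[symmetric] mult.commute)
  then show "\<exists>x. x^2 = p^(2*k) * N" by blast
next
  assume "\<exists>x. x^2 = p^(2*k) * N"
  then obtain x where x: "x^2 = (p^k)^2 * N" by (auto simp: power_mult[symmetric] mult.commute)
  then have "(p^k)^2 dvd x^2" by simp
  then have "p^k dvd x" by simp
  then obtain y where y: "x = p^k * y" by (auto elim!: dvdE)
  have "(p^k)^2 * y^2 = (p^k)^2 * N" using x y by (simp add: power_mult_distrib)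
  moreover have "(p^k)^2 \<noteq> 0" using p prime_gt_0_nat by simp
  ultimately have "y^2 = N" by (metis mult_left_cancel)
  then show "\<exists>x. x^2 = N" by blast
qed

lemma not_sq_odd:
  fixes p :: nat
  assumes p: "prime p" and u: "\<not> p dvd u"
  shows "\<not>(\<exists>x. x^2 = p^(2*k+1) * u)"
proof (induction k)
  case 0
  show ?case
  proof
    assume "\<exists>x. x^2 = p^(2*0+1) * u"
    then obtain x where x: "x^2 = p * u" by auto
    then have "p dvd x^2" by simp
    then have "p dvd x" by (rule prime_dvd_power[OF p])
    then obtain y where y: "x = p*y" by (auto elim!: dvdE)
    have "p * (p * y^2) = p * u" using x y by (simp add: algebra_simps power2_eq_square)
    then have "p * y^2 = u" using p prime_gt_0_nat by simp
    then have "p dvd u" by (metis dvd_triv_left)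
    then show False using u by simp
  qed
next
  case (Suc k)
  show ?case
  proof
    assume "\<exists>x. x^2 = p^(2*Suc k+1) * u"
    then obtain x where x0: "x^2 = p^(2*Suc k+1) * u" by blast
    have e: "2*Suc k+1 = 2 + (2*k+1)" by simp
    have "p^(2*Suc k+1) * u = p^2 * (p^(2*k+1) * u)" by (simp only: e power_add mult.assoc)
    then have x: "x^2 = p^2 * (p^(2*k+1) * u)" using x0 by simp
    then have "p dvd x^2" by simp
    then have "p dvd x" by (rule prime_dvd_power[OF p])
    then obtain y where y: "x = p*y" by (auto elim!: dvdE)
    have "p^2 * y^2 = p^2 * (p^(2*k+1) * u)" using x y by (simp add: power_mult_distrib)
    then have "y^2 = p^(2*k+1) * u" using p prime_gt_0_nat by simp
    then show False using Suc.IH by blast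
  qed
qed

lemma psi_nth: "psi $ n = (if \<exists>x. x^2 = 8*n+1 then 1 else 0)"
proof -
  have "(\<exists>m. n = m*(m+1) div 2) \<longleftrightarrow> (\<exists>x. x^2 = 8*n+1)"
  proof
    assume "\<exists>m. n = m*(m+1) div 2"
    then obtain m where "n = m*(m+1) div 2" by blast
    then have "(2*m+1)^2 = 8*n+1" using sq_odd_tri[of m] by simp
    then show "\<exists>x. x^2 = 8*n+1" by blast
  next
    assume "\<exists>x. x^2 = 8*n+1"
    then obtain x where x: "x^2 = 8*n+1" by blast
    have "odd x"
    proof
      assume "even x"
      then have "even (x^2)" by simp
      then show False using x by simp
    qed
    then obtain j where j: "x = 2*j+1" using oddE by blast
    then have "8*(j*(j+1) div 2) + 1 = 8*n+1" using x sq_odd_tri[of j] by simp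
    then have "n = j*(j+1) div 2" by simp
    then show "\<exists>m. n = m*(m+1) div 2" by blast
  qed
  then show ?thesis unfolding psi_def by simp
qed

lemma odd_pow_8:
  fixes p :: nat
  assumes "odd p"
  shows "\<exists>t. p^(2*k) = 8*t+1"
proof -
  have "odd (p^k)" using assms by simp
  then obtain j where "p^k = 2*j+1" using oddE by blast
  moreover have "p^(2*k) = (p^k)^2" by (metis power_mult mult.commute)
  ultimately have "p^(2*k) = 8*(j*(j+1) div 2) + 1" using sq_odd_tri[of j] by simp
  then show ?thesis by blast
qed

lemma not_dvd_u:
  fixes p j :: nat
  assumes p: "prime p" "odd p" and j: "1 \<le> j" "j \<le> p - 1" and u: "u = 8*p*n + 8*j + c*p"
  shows "\<not> p dvd u"
proof
  assume "p dvd u"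
  then have "p dvd 8*j + p*(8*n + c)" using u by (simp add: algebra_simps)
  then have "p dvd 8*j" by (simp add: dvd_add_left_iff)
  then have "p dvd 8 \<or> p dvd j" using p by (simp add: prime_dvd_mult_iff)
  moreover have "\<not> p dvd 8"
  proof
    assume "p dvd 8"
    then have "p dvd 2^3" by simp
    then have "p dvd 2" by (rule prime_dvd_power[OF p(1)])
    then have "p \<le> 2" by (simp add: dvd_imp_le)
    then show False using p prime_ge_2_nat[of p] by auto
  qed
  moreover have "\<not> p dvd j" using j by (auto dest: dvd_imp_le)
  ultimately show False by blast
qed

lemma cong4: "[(a::int) = b] (mod 2) \<Longrightarrow> [4*a = 4*b] (mod 8)"
proof -
  assume "[a = b] (mod 2)"
  then obtain c where c: "a - b = 2*c" unfolding cong_iff_dvd_diff by blast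
  have "4*a - 4*b = 8*c" using c by simp
  then show ?thesis unfolding cong_iff_dvd_diff by simp
qed

lemma part_i_a:
  assumes p: "prime p" "odd p"
  shows "[g2 (16 * p ^ (2 * \<alpha>) * n + 2 * p ^ (2 * \<alpha>)) = 2 * fps_nth psi n] (mod 4)"
proof -
  obtain t where t: "p^(2*\<alpha>) = 8*t+1" using odd_pow_8[OF p(2)] by blast
  define m where "m = p^(2*\<alpha>)*n + t"
  have K: "16 * p ^ (2 * \<alpha>) * n + 2 * p ^ (2 * \<alpha>) = 16*m+2" unfolding m_def t by (simp add: algebra_simps)
  have E: "8*m+1 = p^(2*\<alpha>) * (8*n+1)" unfolding m_def t by (simp add: algebra_simps)
  have "(\<exists>x. x^2 = 8*m+1) \<longleftrightarrow> (\<exists>x. x^2 = 8*n+1)" unfolding E by (rule sq_scale[OF p(1)])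
  then show ?thesis using g2_16[of m] unfolding K psi_nth by simp
qed

lemma part_i_b:
  assumes p: "prime p" "odd p" and j: "1 \<le> j" "j \<le> p - 1"
  shows "[g2 (16 * p ^ (2 * \<alpha> + 2) * n + 16 * p ^ (2 * \<alpha> + 1) * j + 2 * p ^ (2 * \<alpha> + 2)) = 0] (mod 4)"
proof -
  obtain t where t: "p^(2*(\<alpha>+1)) = 8*t+1" using odd_pow_8[OF p(2)] by blast
  have pp: "p^(2*\<alpha>+2) = p^(2*\<alpha>+1) * p" by simp
  have t2: "p^(2*\<alpha>+2) = 8*t+1" using t by (simp add: algebra_simps)
  define m where "m = p^(2*\<alpha>+2)*n + p^(2*\<alpha>+1)*j + t"
  define u where "u = 8*p*n + 8*j + 1*p"
  have K: "16 * p ^ (2 * \<alpha> + 2) * n + 16 * p ^ (2 * \<alpha> + 1) * j + 2 * p ^ (2 * \<alpha> + 2) = 16*m+2"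
    unfolding m_def using t2 by (simp add: algebra_simps)
  have E: "8*m+1 = p^(2*\<alpha>+1) * u"
  proof -
    have "8*m+1 = 8*p^(2*\<alpha>+2)*n + 8*p^(2*\<alpha>+1)*j + p^(2*\<alpha>+2)"
      unfolding m_def using t2 by (simp add: algebra_simps)
    also have "\<dots> = p^(2*\<alpha>+1) * u" unfolding u_def pp by (simp add: algebra_simps)
    finally show ?thesis .
  qed
  have "\<not> p dvd u" using not_dvd_u[OF p j u_def] .
  then have "\<not>(\<exists>x. x^2 = 8*m+1)" unfolding E by (rule not_sq_odd[OF p(1)])
  then show ?thesis using g2_16[of m] unfolding K by simp
qed

lemma part_ii_a:
  assumes p: "prime p" "odd p" and leg: "Legendre (-8) (int p) = -1"
  shows "[g2 (8 * p ^ (2 * \<alpha>) * n + 3 * p ^ (2 * \<alpha>)) = 4 * fps_nth (ell 1 * ell 8) n] (mod 8)"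
proof -
  obtain t where t: "p^(2*\<alpha>) = 8*t+1" using odd_pow_8[OF p(2)] by blast
  define m where "m = p^(2*\<alpha>)*n + 3*t"
  have K: "8 * p ^ (2 * \<alpha>) * n + 3 * p ^ (2 * \<alpha>) = 8*m+3" unfolding m_def t by (simp add: algebra_simps)
  have E: "8*m+3 = p^(2*\<alpha>) * (8*n+3)" unfolding m_def t by (simp add: algebra_simps)
  have A: "[g2 (8*m+3) = 4 * int (card (Sol (8*n+3)))] (mod 8)"
    using g2_8[of m] unfolding E Sol_scale_pow[OF p(1) leg] .
  have B: "[4 * fps_nth (ell 1 * ell 8) n = 4 * int (card (Sol (8*n+3)))] (mod 8)"
    by (rule cong4[OF ell18_card])
  show ?thesis unfolding K by (rule cong_trans[OF A cong_sym[OF B]])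
qed

lemma part_ii_b:
  assumes p: "prime p" "odd p" and leg: "Legendre (-8) (int p) = -1" and j: "1 \<le> j" "j \<le> p - 1"
  shows "[g2 (8 * p ^ (2 * \<alpha> + 2) * n + 8 * p ^ (2 * \<alpha> + 1) * j + 3 * p ^ (2 * \<alpha> + 2)) = 0] (mod 8)"
proof -
  obtain t where t: "p^(2*(\<alpha>+1)) = 8*t+1" using odd_pow_8[OF p(2)] by blast
  have pp: "p^(2*\<alpha>+2) = p^(2*\<alpha>+1) * p" by simp
  have t2: "p^(2*\<alpha>+2) = 8*t+1" using t by (simp add: algebra_simps)
  define m where "m = p^(2*\<alpha>+2)*n + p^(2*\<alpha>+1)*j + 3*t"
  define u where "u = 8*p*n + 8*j + 3*p"
  have K: "8 * p ^ (2 * \<alpha> + 2) * n + 8 * p ^ (2 * \<alpha> + 1) * j + 3 * p ^ (2 * \<alpha> + 2) = 8*m+3"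
    unfolding m_def using t2 by (simp add: algebra_simps)
  have E: "8*m+3 = p^(2*\<alpha>+1) * u"
  proof -
    have "8*m+3 = 8*p^(2*\<alpha>+2)*n + 8*p^(2*\<alpha>+1)*j + 3*p^(2*\<alpha>+2)"
      unfolding m_def using t2 by (simp add: algebra_simps)
    also have "\<dots> = p^(2*\<alpha>+1) * u" unfolding u_def pp by (simp add: algebra_simps)
    finally show ?thesis .
  qed
  have "\<not> p dvd u" using not_dvd_u[OF p j u_def] .
  then have "card (Sol (8*m+3)) = 0" unfolding E by (rule Sol_empty[OF p(1) leg])
  then show ?thesis using g2_8[of m] unfolding K by simp
qed

theorem theorem2:
  fixes \<alpha> :: nat
  shows
   "(\<forall>p::nat. prime p \<and> p \<ge> 3 \<longrightarrow>
       (\<forall>n. [g2 (16 * p ^ (2 * \<alpha>) * n + 2 * p ^ (2 * \<alpha>)) = 2 * fps_nth psi n] (mod 4)) \<and>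
       (\<forall>j n. 1 \<le> j \<and> j \<le> p - 1 \<longrightarrow>
          [g2 (16 * p ^ (2 * \<alpha> + 2) * n + 16 * p ^ (2 * \<alpha> + 1) * j + 2 * p ^ (2 * \<alpha> + 2)) = 0] (mod 4)))
    \<and>
    (\<forall>p::nat. prime p \<and> p \<ge> 5 \<and> Legendre (-8) (int p) = -1 \<longrightarrow>
       (\<forall>n. [g2 (8 * p ^ (2 * \<alpha>) * n + 3 * p ^ (2 * \<alpha>)) = 4 * fps_nth (ell 1 * ell 8) n] (mod 8)) \<and>
       (\<forall>j n. 1 \<le> j \<and> j \<le> p - 1 \<longrightarrow>
          [g2 (8 * p ^ (2 * \<alpha> + 2) * n + 8 * p ^ (2 * \<alpha> + 1) * j + 3 * p ^ (2 * \<alpha> + 2)) = 0] (mod 8)))"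
proof (rule conjI)
  show "\<forall>p::nat. prime p \<and> p \<ge> 3 \<longrightarrow>
       (\<forall>n. [g2 (16 * p ^ (2 * \<alpha>) * n + 2 * p ^ (2 * \<alpha>)) = 2 * fps_nth psi n] (mod 4)) \<and>
       (\<forall>j n. 1 \<le> j \<and> j \<le> p - 1 \<longrightarrow>
          [g2 (16 * p ^ (2 * \<alpha> + 2) * n + 16 * p ^ (2 * \<alpha> + 1) * j + 2 * p ^ (2 * \<alpha> + 2)) = 0] (mod 4))"
  proof (intro allI impI conjI)
    fix p :: nat assume hp: "prime p \<and> p \<ge> 3"
    then have p: "prime p" "odd p" using prime_odd_nat[of p] by auto
    fix n show "[g2 (16 * p ^ (2 * \<alpha>) * n + 2 * p ^ (2 * \<alpha>)) = 2 * fps_nth psi n] (mod 4)"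
      by (rule part_i_a[OF p])
  next
    fix p :: nat assume hp: "prime p \<and> p \<ge> 3"
    then have p: "prime p" "odd p" using prime_odd_nat[of p] by auto
    fix j n :: nat assume "1 \<le> j \<and> j \<le> p - 1"
    then show "[g2 (16 * p ^ (2 * \<alpha> + 2) * n + 16 * p ^ (2 * \<alpha> + 1) * j + 2 * p ^ (2 * \<alpha> + 2)) = 0] (mod 4)"
      using part_i_b[OF p] by blast
  qed
next
  show "\<forall>p::nat. prime p \<and> p \<ge> 5 \<and> Legendre (-8) (int p) = -1 \<longrightarrow>
       (\<forall>n. [g2 (8 * p ^ (2 * \<alpha>) * n + 3 * p ^ (2 * \<alpha>)) = 4 * fps_nth (ell 1 * ell 8) n] (mod 8)) \<and>
       (\<forall>j n. 1 \<le> j \<and> j \<le> p - 1 \<longrightarrow>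
          [g2 (8 * p ^ (2 * \<alpha> + 2) * n + 8 * p ^ (2 * \<alpha> + 1) * j + 3 * p ^ (2 * \<alpha> + 2)) = 0] (mod 8))"
  proof (intro allI impI conjI)
    fix p :: nat assume hp: "prime p \<and> p \<ge> 5 \<and> Legendre (-8) (int p) = -1"
    then have p: "prime p" "odd p" and leg: "Legendre (-8) (int p) = -1" using prime_odd_nat[of p] by auto
    fix n show "[g2 (8 * p ^ (2 * \<alpha>) * n + 3 * p ^ (2 * \<alpha>)) = 4 * fps_nth (ell 1 * ell 8) n] (mod 8)"
      by (rule part_ii_a[OF p leg])
  next
    fix p :: nat assume hp: "prime p \<and> p \<ge> 5 \<and> Legendre (-8) (int p) = -1"
    then have p: "prime p" "odd p" and leg: "Legendre (-8) (int p) = -1" using prime_odd_nat[of p] by auto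
    fix j n :: nat assume "1 \<le> j \<and> j \<le> p - 1"
    then show "[g2 (8 * p ^ (2 * \<alpha> + 2) * n + 8 * p ^ (2 * \<alpha> + 1) * j + 3 * p ^ (2 * \<alpha> + 2)) = 0] (mod 8)"
      using part_ii_b[OF p leg] by blast
  qed
qed

end
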